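(* Fix $n,r\ge1$ and $0\le k\le n$. Then \[ \dim\mathcal{S}_r^-\Lambda^k(\mathbb{R}^n)=\dim\mathcal{P}_r^-\Lambda^k(\mathbb{R}^n)+\dim\mathcal{J}_r\Lambda^k(\mathbb{R}^n)+\dim\mathcal{J}_r\Lambda^{k-1}(\mathbb{R}^n), \] where $\dim\mathcal{P}_r^-\Lambda^k(\mathbb{R}^n)=\binom{r+n}{r+k}\binom{r+k-1}{k}$ and $\mathcal{J}_r\Lambda^{-1}:=0$.
   Context: Fix $n\ge1$. For a multi-index $\alpha\in\mathbb{N}^n$ and a subset $\sigma=\{\sigma(1)<\dots<\sigma(k)\}\subset\{1,\dots,n\}$, the form monomial is $x^\alpha dx_\sigma:=x_1^{\alpha_1}\cdots x_n^{\alpha_n}\,dx_{\sigma(1)}\wedge\cdots\wedge dx_{\sigma(k)}$, of degree $|\alpha|$. $\mathcal{H}_r\Lambda^k(\mathbb{R}^n)$ is the span of form monomials with $|\alpha|=r$, $|\sigma|=k$ (it is $0$ if $r<0$ or $k\notin\{0,\dots,n\}$), and $\mathcal{P}_r\Lambda^k:=\bigoplus_{j=0}^r\mathcal{H}_j\Lambda^k$ ($=0$ if $r<0$). $d$ is the exterior derivative. The Koszul operator $\kappa$ is defined on monomials by $\kappa(x^\alpha dx_\sigma)=\sum_{i=1}^k(-1)^{i+1}x^\alpha x_{\sigma(i)}\,dx_{\sigma(1)}\wedge\cdots\wedge\widehat{dx_{\sigma(i)}}\wedge\cdots\wedge dx_{\sigma(k)}$ and extended linearly. The trimmed polynomial space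 is $\mathcal{P}_r^-\Lambda^k:=\mathcal{P}_{r-1}\Lambda^k\oplus\kappa\,\mathcal{H}_{r-1}\Lambda^{k+1}$. The linear degree is $\mathrm{ldeg}(x^\alpha dx_\sigma):=\#\{i\notin\sigma:\alpha_i=1\}$, and $\mathcal{H}_{r,l}\Lambda^k$ is the span of form monomials in $\mathcal{H}_r\Lambda^k$ with linear degree $\ge l$. Define $\mathcal{J}_r\Lambda^k:=\sum_{l\ge1}\kappa\,\mathcal{H}_{r+l-1,l}\Lambda^{k+1}$, the serendipity space $\mathcal{S}_r\Lambda^k:=\mathcal{P}_r\Lambda^k+\mathcal{J}_r\Lambda^k+d\,\mathcal{J}_{r+1}\Lambda^{k-1}$ (forms of degree $-1$ or $n+1$ are $0$), and for $r\ge1$ the trimmed serendipity space $\mathcal{S}_r^-\Lambda^k:=\mathcal{S}_{r-1}\Lambda^k+\kappa\,\mathcal{S}_{r-1}\Lambda^{k+1}$, all on $\mathbb{R}^n$. *)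

theory Defs
  imports Complex_Main "HOL-Library.Function_Algebras"
begin

text \<open>Polynomial differential forms on R^n with real coefficients, represented by their
  coefficient functions on form monomials x^alpha dx_sigma.  A monomial index is a pair
  (alpha, sigma) with alpha :: nat => nat (exponents, alpha i = 0 outside {1..n}) and
  sigma a subset of {1..n} (the increasing index list sigma(1) < ... < sigma(k)).
  Forms are finitely supported coefficient functions; all spaces below are spans of
  such functions.\<close>

type_synonym form = "(nat \<Rightarrow> nat) \<times> nat set \<Rightarrow> real"

definition fscale :: "real \<Rightarrow> form \<Rightarrow> form" where
  "fscale c f = (\<lambda>m. c * f m)"

abbreviation fspan :: "form set \<Rightarrow> form set" where
  "fspan \<equiv> module.span fscale"

abbreviation fdim :: "form set \<Rightarrow> nat" where
  "fdim \<equiv> vector_space.dim fscale"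

definition mono :: "(nat \<Rightarrow> nat) \<Rightarrow> nat set \<Rightarrow> form" where
  "mono \<alpha> \<sigma> = (\<lambda>m. if m = (\<alpha>, \<sigma>) then 1 else 0)"

text \<open>Linear extension of an operator given on monomials (for finitely supported forms).\<close>
definition lin_ext :: "((nat \<Rightarrow> nat) \<Rightarrow> nat set \<Rightarrow> form) \<Rightarrow> form \<Rightarrow> form" where
  "lin_ext g f = (\<Sum>m\<in>{m. f m \<noteq> 0}. fscale (f m) (g (fst m) (snd m)))"

text \<open>Koszul operator on monomials: the i-th element j of sigma has
  card {l in sigma. l < j} = i - 1, so the sign (-1)^(i+1) equals (-1)^(card ...).\<close>
definition kappa_mono :: "(nat \<Rightarrow> nat) \<Rightarrow> nat set \<Rightarrow> form" where
  "kappa_mono \<alpha> \<sigma> = (\<Sum>j\<in>\<sigma>. fscale ((-1) ^ card {l\<in>\<sigma>. l < j})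
        (mono (\<alpha>(j := Suc (\<alpha> j))) (\<sigma> - {j})))"

definition kappa :: "form \<Rightarrow> form" where
  "kappa = lin_ext kappa_mono"

text \<open>Exterior derivative on monomials:
  d(x^alpha dx_sigma) = sum_i alpha_i x^(alpha - e_i) dx_i /\ dx_sigma, and
  dx_i /\ dx_sigma = (-1)^(card {l in sigma. l < i}) dx_(sigma + {i}) for i not in sigma.\<close>
definition d_mono :: "nat \<Rightarrow> (nat \<Rightarrow> nat) \<Rightarrow> nat set \<Rightarrow> form" where
  "d_mono n \<alpha> \<sigma> = (\<Sum>i\<in>{1..n} - \<sigma>. fscale (real (\<alpha> i) * (-1) ^ card {l\<in>\<sigma>. l < i})
        (mono (\<alpha>(i := \<alpha> i - 1)) (insert i \<sigma>)))"

definition dext :: "nat \<Rightarrow> form \<Rightarrow> form" where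
  "dext n = lin_ext (d_mono n)"

text \<open>Monomials in n variables of degree r and form degree k (empty if r < 0 or k not in 0..n).\<close>
definition Mon :: "nat \<Rightarrow> int \<Rightarrow> int \<Rightarrow> ((nat \<Rightarrow> nat) \<times> nat set) set" where
  "Mon n r k = {(\<alpha>, \<sigma>). (\<forall>i. \<alpha> i \<noteq> 0 \<longrightarrow> i \<in> {1..n}) \<and> \<sigma> \<subseteq> {1..n}
        \<and> int (\<Sum>i\<in>{1..n}. \<alpha> i) = r \<and> int (card \<sigma>) = k}"

definition ldeg :: "nat \<Rightarrow> (nat \<Rightarrow> nat) \<times> nat set \<Rightarrow> nat" where
  "ldeg n m = card {i\<in>{1..n}. i \<notin> snd m \<and> fst m i = 1}"

definition H :: "nat \<Rightarrow> int \<Rightarrow> int \<Rightarrow> form set" where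
  "H n r k = fspan ((\<lambda>m. mono (fst m) (snd m)) ` Mon n r k)"

definition Hl :: "nat \<Rightarrow> int \<Rightarrow> nat \<Rightarrow> int \<Rightarrow> form set" where
  "Hl n r l k = fspan ((\<lambda>m. mono (fst m) (snd m)) ` {m\<in>Mon n r k. ldeg n m \<ge> l})"

definition P :: "nat \<Rightarrow> int \<Rightarrow> int \<Rightarrow> form set" where
  "P n r k = fspan (\<Union>j\<in>{0..r}. H n j k)"

definition Pminus :: "nat \<Rightarrow> int \<Rightarrow> int \<Rightarrow> form set" where
  "Pminus n r k = fspan (P n (r - 1) k \<union> kappa ` H n (r - 1) (k + 1))"

definition J :: "nat \<Rightarrow> int \<Rightarrow> int \<Rightarrow> form set" where
  "J n r k = fspan (\<Union>l\<in>{1::nat..}. kappa ` Hl n (r + int l - 1) l (k + 1))"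

definition S :: "nat \<Rightarrow> int \<Rightarrow> int \<Rightarrow> form set" where
  "S n r k = fspan (P n r k \<union> J n r k \<union> dext n ` J n (r + 1) (k - 1))"

definition Sminus :: "nat \<Rightarrow> int \<Rightarrow> int \<Rightarrow> form set" where
  "Sminus n r k = fspan (S n (r - 1) k \<union> kappa ` S n (r - 1) (k + 1))"

end

theory Submission
  imports Defs "HOL-Library.FuncSet" "HOL-Library.Multiset"
begin


interpretation fvs: vector_space fscale
  by unfold_locales (auto simp: fscale_def algebra_simps fun_eq_iff)

lemma sum_apply_form: "(\<Sum>x\<in>A. (f x :: form)) m = (\<Sum>x\<in>A. f x m)"
  by (induction A rule: infinite_finite_induct) auto

lemma fscale_apply[simp]: "fscale c f m = c * f m" by (simp add: fscale_def)
lemma fscale_zero[simp]: "fscale 0 f = 0" by (simp add: fun_eq_iff)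

definition supp :: "form \<Rightarrow> ((nat \<Rightarrow> nat) \<times> nat set) set" where
  "supp f = {m. f m \<noteq> 0}"

definition mn :: "(nat \<Rightarrow> nat) \<times> nat set \<Rightarrow> form" where
  "mn m = mono (fst m) (snd m)"

lemma mn_apply: "mn m x = (if x = m then 1 else 0)"
  by (cases m) (auto simp: mn_def mono_def)

lemma mono_mn: "mono a s = mn (a, s)" by (simp add: mn_def)

lemma supp_add: "supp (f + g) \<subseteq> supp f \<union> supp g"
  by (auto simp: supp_def)
lemma supp_scale: "supp (fscale c f) \<subseteq> supp f"
  by (auto simp: supp_def)
lemma supp_zero[simp]: "supp 0 = {}"
  by (auto simp: supp_def)

lemma supp_sub_subspace: "fvs.subspace {f. supp f \<subseteq> M}"
proof -
  have "\<And>x y. supp x \<subseteq> M \<Longrightarrow> supp y \<subseteq> M \<Longrightarrow> supp (x + y) \<subseteq> M"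
    using supp_add by blast
  moreover have "\<And>c x. supp x \<subseteq> M \<Longrightarrow> supp (fscale c x) \<subseteq> M"
    using supp_scale by blast
  ultimately show ?thesis unfolding fvs.subspace_def by simp
qed

lemma form_eq_sum:
  assumes "finite M" "supp f \<subseteq> M"
  shows "f = (\<Sum>m\<in>M. fscale (f m) (mn m))"
proof
  fix x
  have "(\<Sum>m\<in>M. fscale (f m) (mn m)) x = (\<Sum>m\<in>M. (if m = x then f m else 0))"
    by (auto simp: sum_apply_form mn_apply intro!: sum.cong)
  also have "\<dots> = (if x \<in> M then f x else 0)" using assms(1) by (simp add: sum.delta)
  also have "\<dots> = f x" using assms(2) by (auto simp: supp_def)
  finally show "f x = (\<Sum>m\<in>M. fscale (f m) (mn m)) x" by simp
qed

lemma span_mn_char: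
  assumes "finite M"
  shows "fspan (mn ` M) = {f. supp f \<subseteq> M}"
proof
  show "fspan (mn ` M) \<subseteq> {f. supp f \<subseteq> M}"
    by (rule fvs.span_minimal[OF _ supp_sub_subspace]) (auto simp: supp_def mn_apply split: if_splits)
  show "{f. supp f \<subseteq> M} \<subseteq> fspan (mn ` M)"
  proof
    fix f assume "f \<in> {f. supp f \<subseteq> M}"
    then have "f = (\<Sum>m\<in>M. fscale (f m) (mn m))" using form_eq_sum assms by auto
    also have "\<dots> \<in> fspan (mn ` M)"
      by (intro fvs.span_sum fvs.span_scale fvs.span_base) auto
    finally show "f \<in> fspan (mn ` M)" .
  qed
qed

lemma mn_inj: "inj mn"
  by (rule injI) (metis mn_apply zero_neq_one)

lemma independent_mn:
  assumes "finite M" shows "fvs.independent (mn ` M)"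
proof -
  { fix m assume m: "m \<in> M" "mn m \<in> fspan (mn ` M - {mn m})"
    have "mn ` M - {mn m} = mn ` (M - {m})" using mn_inj by (auto simp: inj_eq)
    with m span_mn_char[of "M - {m}"] assms have "supp (mn m) \<subseteq> M - {m}" by auto
    moreover have "m \<in> supp (mn m)" by (simp add: supp_def mn_apply)
    ultimately have False by auto }
  then show ?thesis unfolding fvs.dependent_def by blast
qed

lemma dim_mn: "finite M \<Longrightarrow> fdim (mn ` M) = card M"
  using fvs.dim_eq_card_independent[OF independent_mn] card_image[OF inj_on_subset[OF mn_inj]]
  by auto

lemma dim_supp: "finite M \<Longrightarrow> fdim {f. supp f \<subseteq> M} = card M"
  by (metis dim_mn fvs.dim_span span_mn_char)


definition Fin :: "form set" where "Fin = {f. finite (supp f)}"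

lemma Fin_subspace: "fvs.subspace Fin"
proof -
  have "\<And>x y. finite (supp x) \<Longrightarrow> finite (supp y) \<Longrightarrow> finite (supp (x + y))"
    using supp_add finite_subset by blast
  moreover have "\<And>c x. finite (supp x) \<Longrightarrow> finite (supp (fscale c x))"
    using supp_scale finite_subset by blast
  ultimately show ?thesis unfolding fvs.subspace_def Fin_def by simp
qed

lemma supp_mn: "supp (mn m) = {m}" by (auto simp: supp_def mn_apply)
lemma mn_Fin[simp]: "mn m \<in> Fin" by (simp add: Fin_def supp_mn)

lemma span_Fin: "A \<subseteq> Fin \<Longrightarrow> fspan A \<subseteq> Fin"
  using fvs.span_minimal Fin_subspace by blast

lemma lin_ext_eq:
  assumes "finite M" "supp f \<subseteq> M"
  shows "lin_ext g f = (\<Sum>m\<in>M. fscale (f m) (g (fst m) (snd m)))"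
  unfolding lin_ext_def
  by (rule sum.mono_neutral_left) (use assms in \<open>auto simp: supp_def\<close>)

lemma lin_ext_add:
  assumes "f \<in> Fin" "h \<in> Fin"
  shows "lin_ext g (f + h) = lin_ext g f + lin_ext g h"
proof -
  let ?M = "supp f \<union> supp h"
  have fin: "finite ?M" using assms by (simp add: Fin_def)
  have "lin_ext g (f + h) = (\<Sum>m\<in>?M. fscale ((f + h) m) (g (fst m) (snd m)))"
    by (rule lin_ext_eq[OF fin]) (use supp_add in blast)
  also have "\<dots> = (\<Sum>m\<in>?M. fscale (f m) (g (fst m) (snd m))) + (\<Sum>m\<in>?M. fscale (h m) (g (fst m) (snd m)))"
    by (simp add: fvs.scale_left_distrib sum.distrib)
  also have "\<dots> = lin_ext g f + lin_ext g h"
    using lin_ext_eq[OF fin, of f g] lin_ext_eq[OF fin, of h g] by auto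
  finally show ?thesis .
qed

lemma lin_ext_scale:
  assumes "f \<in> Fin"
  shows "lin_ext g (fscale c f) = fscale c (lin_ext g f)"
proof -
  have fin: "finite (supp f)" using assms by (simp add: Fin_def)
  have "lin_ext g (fscale c f) = (\<Sum>m\<in>supp f. fscale (fscale c f m) (g (fst m) (snd m)))"
    by (rule lin_ext_eq[OF fin]) (use supp_scale in blast)
  also have "\<dots> = fscale c (\<Sum>m\<in>supp f. fscale (f m) (g (fst m) (snd m)))"
    by (simp add: fvs.scale_sum_right fvs.scale_scale)
  also have "\<dots> = fscale c (lin_ext g f)"
    using lin_ext_eq[OF fin, of f g] by auto
  finally show ?thesis .
qed

lemma lin_ext_zero[simp]: "lin_ext g 0 = 0"
  by (simp add: lin_ext_def)

lemma lin_ext_mn[simp]: "lin_ext g (mn m) = g (fst m) (snd m)"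
  using lin_ext_eq[of "{m}" "mn m" g] by (simp add: supp_mn mn_apply)

lemma lin_ext_mono[simp]: "lin_ext g (mono a s) = g a s"
  using lin_ext_mn[of g "(a,s)"] by (simp add: mono_mn)

lemma lin_ext_sum:
  assumes "\<And>a. a \<in> A \<Longrightarrow> h a \<in> Fin"
  shows "lin_ext g (\<Sum>a\<in>A. h a) = (\<Sum>a\<in>A. lin_ext g (h a))"
  using assms
proof (induction A rule: infinite_finite_induct)
  case (insert x F)
  have "(\<Sum>a\<in>F. h a) \<in> Fin"
    using insert by (intro fvs.subspace_sum[OF Fin_subspace]) auto
  have "lin_ext g (h x + sum h F) = lin_ext g (h x) + lin_ext g (sum h F)"
    by (rule lin_ext_add) (use insert \<open>(\<Sum>a\<in>F. h a) \<in> Fin\<close> in auto)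
  moreover have "lin_ext g (sum h F) = (\<Sum>a\<in>F. lin_ext g (h a))"
    using insert by auto
  ultimately show ?case using insert by (simp only: sum.insert[OF insert(1,2)])
qed auto

lemma lin_ext_Fin: "lin_ext g f \<in> Fin" if "\<And>a s. g a s \<in> Fin"
  unfolding lin_ext_def using that
  by (intro fvs.subspace_sum[OF Fin_subspace] fvs.subspace_scale[OF Fin_subspace]) auto

lemma lin_ext_diff:
  assumes "f \<in> Fin" "h \<in> Fin"
  shows "lin_ext g (f - h) = lin_ext g f - lin_ext g h"
proof -
  have "f - h = f + fscale (-1) h" by (simp add: fun_eq_iff)
  moreover have "fscale (-1) h \<in> Fin" using assms Fin_subspace fvs.subspace_scale by blast
  ultimately have "lin_ext g (f - h) = lin_ext g f + fscale (-1) (lin_ext g h)"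
    using assms by (simp only: lin_ext_add lin_ext_scale)
  then show ?thesis by (simp add: fun_eq_iff)
qed

lemma span_image_lin:
  assumes "A \<subseteq> Fin"
  shows "fspan (lin_ext g ` A) = lin_ext g ` fspan A"
proof
  have sub: "fvs.subspace {x. x \<in> Fin \<and> lin_ext g x \<in> fspan (lin_ext g ` A)}"
    unfolding fvs.subspace_def
    using Fin_subspace[unfolded fvs.subspace_def]
    by (auto simp: lin_ext_add lin_ext_scale fvs.span_add fvs.span_scale fvs.span_zero)
  have "fspan A \<subseteq> {x. x \<in> Fin \<and> lin_ext g x \<in> fspan (lin_ext g ` A)}"
    by (rule fvs.span_minimal[OF _ sub]) (use assms fvs.span_base in auto)
  then show "lin_ext g ` fspan A \<subseteq> fspan (lin_ext g ` A)" by auto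
  have FA: "fspan A \<subseteq> Fin" using span_Fin assms by blast
  have "fvs.subspace (lin_ext g ` fspan A)"
    unfolding fvs.subspace_def
  proof (intro conjI ballI allI)
    show "0 \<in> lin_ext g ` fspan A"
      using fvs.span_zero by (metis image_eqI lin_ext_zero)
    fix x y assume "x \<in> lin_ext g ` fspan A" "y \<in> lin_ext g ` fspan A"
    then obtain a b where ab: "a \<in> fspan A" "b \<in> fspan A" "x = lin_ext g a" "y = lin_ext g b" by auto
    then have "x + y = lin_ext g (a + b)" using FA by (simp add: lin_ext_add subsetD)
    then show "x + y \<in> lin_ext g ` fspan A" using ab fvs.span_add by blast
  next
    fix c x assume "x \<in> lin_ext g ` fspan A"
    then obtain a where ab: "a \<in> fspan A" "x = lin_ext g a" by auto
    then have "fscale c x = lin_ext g (fscale c a)" using FA by (simp add: lin_ext_scale subsetD)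
    then show "fscale c x \<in> lin_ext g ` fspan A" using ab fvs.span_scale by blast
  qed
  then show "fspan (lin_ext g ` A) \<subseteq> lin_ext g ` fspan A"
    using fvs.span_minimal fvs.span_base by (metis image_mono subsetI)
qed


lemma basis_of_finite:
  assumes "finite F"
  obtains B where "B \<subseteq> F" "fvs.independent B" "fspan B = fspan F" "fdim F = card B" "finite B"
proof -
  obtain B where B: "{} \<subseteq> B" "B \<subseteq> F" "fvs.independent B" "F \<subseteq> fspan B"
    using fvs.maximal_independent_subset_extend[of "{}" F, OF empty_subsetI fvs.independent_empty] by blast
  have sp: "fspan B = fspan F"
    unfolding fvs.span_eq using B fvs.span_superset by blast
  show ?thesis
    using that[OF B(2,3) sp] fvs.dim_eq_card[OF sp B(3)] finite_subset[OF B(2) assms] by auto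
qed

lemma dim_union_direct:
  assumes "finite FA" "finite FB" "fspan FA \<inter> fspan FB \<subseteq> {0}"
  shows "fdim (FA \<union> FB) = fdim FA + fdim FB"
proof -
  obtain BA where A: "BA \<subseteq> FA" "fvs.independent BA" "fspan BA = fspan FA" "fdim FA = card BA" "finite BA"
    using basis_of_finite[OF assms(1)] by blast
  obtain BB where B: "BB \<subseteq> FB" "fvs.independent BB" "fspan BB = fspan FB" "fdim FB = card BB" "finite BB"
    using basis_of_finite[OF assms(2)] by blast
  have disj: "BA \<inter> BB = {}"
  proof (rule ccontr)
    assume "BA \<inter> BB \<noteq> {}"
    then obtain x where x: "x \<in> BA" "x \<in> BB" by auto
    have "x \<in> fspan BA" "x \<in> fspan BB" using x by (auto intro: fvs.span_base)
    then have "x \<in> fspan FA \<inter> fspan FB" unfolding A(3) B(3) by blast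
    then have "x = 0" using assms(3) by auto
    then show False using x A(2) fvs.dependent_zero by auto
  qed
  have ind: "fvs.independent (BA \<union> BB)"
    unfolding fvs.independent_explicit_module
  proof (intro allI impI)
    fix t u v assume t: "finite t" "t \<subseteq> BA \<union> BB" "(\<Sum>v\<in>t. fscale (u v) v) = 0" "v \<in> t"
    let ?tA = "t \<inter> BA" and ?tB = "t - BA"
    have split: "(\<Sum>v\<in>t. fscale (u v) v) = (\<Sum>v\<in>?tA. fscale (u v) v) + (\<Sum>v\<in>?tB. fscale (u v) v)"
    proof -
      have e: "t = ?tA \<union> ?tB" by blast
      have fA: "finite ?tA" using t(1) by simp
      have fB: "finite ?tB" using t(1) by simp
      have 1: "(\<Sum>v\<in>?tA \<union> ?tB. fscale (u v) v) = (\<Sum>v\<in>?tA. fscale (u v) v) + (\<Sum>v\<in>?tB. fscale (u v) v)"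
        by (rule sum.union_disjoint[OF fA fB]) blast
      have 2: "(\<Sum>v\<in>t. fscale (u v) v) = (\<Sum>v\<in>?tA \<union> ?tB. fscale (u v) v)"
        using e by (rule arg_cong)
      show ?thesis using 1 2 by (rule trans[rotated])
    qed
    have a: "(\<Sum>v\<in>?tA. fscale (u v) v) \<in> fspan FA"
    proof -
      have "?tA \<subseteq> fspan BA" using fvs.span_base by blast
      then have "?tA \<subseteq> fspan FA" unfolding A(3) .
      then show ?thesis by (intro fvs.span_sum fvs.span_scale) auto
    qed
    have b: "(\<Sum>v\<in>?tB. fscale (u v) v) \<in> fspan FB"
    proof -
      have "?tB \<subseteq> fspan BB" using t(2) fvs.span_base by blast
      then have "?tB \<subseteq> fspan FB" unfolding B(3) .
      then show ?thesis by (intro fvs.span_sum fvs.span_scale) auto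
    qed
    have "(\<Sum>v\<in>?tA. fscale (u v) v) = - (\<Sum>v\<in>?tB. fscale (u v) v)"
      using t(3) split by (simp add: eq_neg_iff_add_eq_0)
    then have "(\<Sum>v\<in>?tA. fscale (u v) v) \<in> fspan FB" using fvs.span_neg[OF b] by simp
    then have za: "(\<Sum>v\<in>?tA. fscale (u v) v) = 0" using a assms(3) by blast
    then have zb: "(\<Sum>v\<in>?tB. fscale (u v) v) = 0" using t(3) split by simp
    show "u v = 0"
    proof (cases "v \<in> BA")
      case True
      have "finite ?tA" "?tA \<subseteq> BA" "v \<in> ?tA" using t True by auto
      then show ?thesis using fvs.independentD[OF A(2) _ _ za] by blast
    next
      case False
      have "finite ?tB" "?tB \<subseteq> BB" "v \<in> ?tB" using t False by auto
      then show ?thesis using fvs.independentD[OF B(2) _ _ zb] by blast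
    qed
  qed
  have sp: "fspan (BA \<union> BB) = fspan (FA \<union> FB)"
    unfolding fvs.span_eq
  proof
    show "BA \<union> BB \<subseteq> fspan (FA \<union> FB)" using A(1) B(1) fvs.span_base by blast
    have "FA \<subseteq> fspan BA" unfolding A(3) by (rule fvs.span_superset)
    then have "FA \<subseteq> fspan (BA \<union> BB)" using fvs.span_mono[of BA "BA \<union> BB"] by blast
    have "FB \<subseteq> fspan BB" unfolding B(3) by (rule fvs.span_superset)
    then have "FB \<subseteq> fspan (BA \<union> BB)" using fvs.span_mono[of BB "BA \<union> BB"] by blast
    moreover note \<open>FA \<subseteq> fspan (BA \<union> BB)\<close>
    ultimately show "FA \<union> FB \<subseteq> fspan (BA \<union> BB)" by blast
  qed
  have "fdim (FA \<union> FB) = card (BA \<union> BB)"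
    using fvs.dim_eq_card[OF sp ind] by simp
  also have "\<dots> = card BA + card BB" using card_Un_disjoint[OF A(5) B(5) disj] .
  finally show ?thesis using A B by simp
qed

lemma dim_image_inj:
  assumes "finite FA" "FA \<subseteq> Fin"
    and inj: "\<And>x. x \<in> fspan FA \<Longrightarrow> lin_ext g x = 0 \<Longrightarrow> x = 0"
  shows "fdim (lin_ext g ` FA) = fdim FA"
proof -
  obtain BA where A: "BA \<subseteq> FA" "fvs.independent BA" "fspan BA = fspan FA" "fdim FA = card BA" "finite BA"
    using basis_of_finite[OF assms(1)] by blast
  have SF: "fspan FA \<subseteq> Fin" using span_Fin assms(2) by blast
  have BF: "BA \<subseteq> Fin" using A(1) assms(2) by blast
  have injon: "inj_on (lin_ext g) (fspan FA)"
  proof (rule inj_onI)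
    fix x y assume xy: "x \<in> fspan FA" "y \<in> fspan FA" "lin_ext g x = lin_ext g y"
    then have "lin_ext g (x - y) = 0" using SF by (simp add: lin_ext_diff subsetD)
    then have "x - y = 0" using inj fvs.span_diff xy by blast
    then show "x = y" by simp
  qed
  have injB: "inj_on (lin_ext g) BA"
    using inj_on_subset[OF injon] A fvs.span_base by blast
  have ind: "fvs.independent (lin_ext g ` BA)"
    unfolding fvs.dependent_def
  proof
    assume "\<exists>a\<in>lin_ext g ` BA. a \<in> fspan (lin_ext g ` BA - {a})"
    then obtain b where b: "b \<in> BA" "lin_ext g b \<in> fspan (lin_ext g ` BA - {lin_ext g b})" by auto
    have "lin_ext g ` BA - {lin_ext g b} = lin_ext g ` (BA - {b})"
      using injB b(1) by (auto simp: inj_on_def)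
    then have "lin_ext g b \<in> lin_ext g ` fspan (BA - {b})"
      using b(2) span_image_lin[of "BA - {b}" g] BF by auto
    then obtain y where y: "y \<in> fspan (BA - {b})" "lin_ext g b = lin_ext g y" by auto
    have "y \<in> fspan FA" using y(1) A(3) fvs.span_mono[of "BA - {b}" BA] by auto
    moreover have "b \<in> fspan FA" using b(1) A(3) fvs.span_base by blast
    ultimately have "b = y" using injon y(2) by (auto simp: inj_on_def)
    then show False using y(1) b(1) A(2) unfolding fvs.dependent_def by auto
  qed
  have "fspan (lin_ext g ` BA) = fspan (lin_ext g ` FA)"
    using span_image_lin[OF BF] span_image_lin[OF assms(2)] A(3) by simp
  then have "fdim (lin_ext g ` FA) = card (lin_ext g ` BA)"
    using fvs.dim_eq_card[OF _ ind] by simp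
  also have "\<dots> = card BA" using card_image[OF injB] .
  finally show ?thesis using A by simp
qed


definition sg :: "nat set \<Rightarrow> nat \<Rightarrow> real" where
  "sg s j = (-1) ^ card {l\<in>s. l < j}"

lemma sg_sq: "sg s j * sg s j = 1"
  by (simp add: sg_def power_mult_distrib[symmetric] power_add[symmetric] mult_2[symmetric] power_mult)

lemma sg_remove:
  assumes "finite s" "a \<in> s"
  shows "sg (s - {a}) b = (if a < b then - sg s b else sg s b)"
proof (cases "a < b")
  case True
  have "{l \<in> s. l < b} = insert a {l \<in> s - {a}. l < b}" using True assms by auto
  then have "card {l \<in> s. l < b} = Suc (card {l \<in> s - {a}. l < b})"
    using assms by (simp add: card_insert_if)
  then show ?thesis using True by (simp add: sg_def)
next
  case False
  have "{l \<in> s. l < b} = {l \<in> s - {a}. l < b}" using False by auto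
  then show ?thesis using False by (simp add: sg_def)
qed

lemma sg_insert:
  assumes "finite s" "b \<notin> s"
  shows "sg (insert b s) a = (if b < a then - sg s a else sg s a)"
proof -
  have "sg (insert b s - {b}) a = (if b < a then - sg (insert b s) a else sg (insert b s) a)"
    using assms by (intro sg_remove) auto
  then show ?thesis using assms by (auto split: if_splits)
qed

lemma sg_remove_self: "sg (s - {a}) a = sg s a"
  unfolding sg_def by (rule arg_cong[where f="\<lambda>x. (-1) ^ card x"]) auto

lemma sg_insert_self: "sg (insert a s) a = sg s a"
  unfolding sg_def by (rule arg_cong[where f="\<lambda>x. (-1) ^ card x"]) auto

lemma kappa_mono_sg:
  "kappa_mono a s = (\<Sum>j\<in>s. fscale (sg s j) (mono (a(j := Suc (a j))) (s - {j})))"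
  by (simp add: kappa_mono_def sg_def)

lemma d_mono_sg:
  "d_mono n a s = (\<Sum>i\<in>{1..n} - s. fscale (real (a i) * sg s i) (mono (a(i := a i - 1)) (insert i s)))"
  by (simp add: d_mono_def sg_def)

lemma sum_scale_mono_Fin: "(\<Sum>x\<in>A. fscale (c x) (mono (a x) (s x))) \<in> Fin"
  by (intro fvs.subspace_sum[OF Fin_subspace] fvs.subspace_scale[OF Fin_subspace])
     (simp add: mono_mn)

lemma kappa_mono_Fin: "kappa_mono a s \<in> Fin"
  unfolding kappa_mono_sg by (rule sum_scale_mono_Fin)

lemma d_mono_Fin: "d_mono n a s \<in> Fin"
  unfolding d_mono_sg by (rule sum_scale_mono_Fin)

lemma kappa_Fin: "kappa f \<in> Fin"
  unfolding kappa_def by (rule lin_ext_Fin) (rule kappa_mono_Fin)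

lemma dext_Fin: "dext n f \<in> Fin"
  unfolding dext_def by (rule lin_ext_Fin) (rule d_mono_Fin)

lemma lin_ext_sum_mono:
  "lin_ext g (\<Sum>x\<in>A. fscale (c x) (mono (a x) (s x))) = (\<Sum>x\<in>A. fscale (c x) (g (a x) (s x)))"
proof -
  have "lin_ext g (\<Sum>x\<in>A. fscale (c x) (mono (a x) (s x))) = (\<Sum>x\<in>A. lin_ext g (fscale (c x) (mono (a x) (s x))))"
    by (rule lin_ext_sum) (simp add: mono_mn fvs.subspace_scale[OF Fin_subspace])
  also have "\<dots> = (\<Sum>x\<in>A. fscale (c x) (g (a x) (s x)))"
    by (simp add: lin_ext_scale mono_mn)
  finally show ?thesis .
qed

lemma sum_antisym_form:
  assumes "finite A" "\<And>p. p \<in> A \<Longrightarrow> prod.swap p \<in> A"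
    "\<And>p. p \<in> A \<Longrightarrow> F (prod.swap p) = - F p"
  shows "sum F A = (0::form)"
proof -
  have "sum F A = sum (\<lambda>p. F (prod.swap p)) A"
    by (rule sum.reindex_bij_witness[of _ prod.swap prod.swap]) (use assms in auto)
  also have "\<dots> = - sum F A" using assms(3) by (simp add: sum_negf)
  finally have e: "sum F A = - sum F A" .
  show ?thesis
  proof
    fix m
    have "sum F A m = - sum F A m" using e by (metis uminus_apply)
    then show "sum F A m = 0 m" by simp
  qed
qed

lemma fscale_neg: "fscale (- c) x = - fscale c x"
  by (simp add: fun_eq_iff)


lemma kappa_kappa_mono:
  assumes fin: "finite s"
  shows "kappa (kappa_mono a s) = 0"
proof -
  define F where "F p = fscale (sg s (fst p) * sg (s - {fst p}) (snd p))
     (mono (a(fst p := Suc (a (fst p)), snd p := Suc (a (snd p)))) (s - {fst p} - {snd p}))" for p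
  have "kappa (kappa_mono a s) = (\<Sum>j\<in>s. fscale (sg s j) (kappa_mono (a(j := Suc (a j))) (s - {j})))"
    unfolding kappa_mono_sg[of a s] kappa_def by (rule lin_ext_sum_mono)
  also have "\<dots> = (\<Sum>j\<in>s. \<Sum>i\<in>s - {j}. F (j, i))"
  proof (rule sum.cong[OF refl])
    fix j assume j: "j \<in> s"
    have "fscale (sg s j) (kappa_mono (a(j := Suc (a j))) (s - {j}))
       = (\<Sum>i\<in>s - {j}. fscale (sg s j) (fscale (sg (s - {j}) i)
            (mono ((a(j := Suc (a j)))(i := Suc ((a(j := Suc (a j))) i))) (s - {j} - {i}))))"
      unfolding kappa_mono_sg by (simp add: fvs.scale_sum_right)
    also have "\<dots> = (\<Sum>i\<in>s - {j}. F (j, i))"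
      by (rule sum.cong[OF refl]) (auto simp: F_def fvs.scale_scale)
    finally show "fscale (sg s j) (kappa_mono (a(j := Suc (a j))) (s - {j})) = (\<Sum>i\<in>s - {j}. F (j, i))" .
  qed
  also have "\<dots> = sum F (SIGMA j:s. s - {j})"
    using sum.Sigma[of s "\<lambda>j. s - {j}" "\<lambda>j i. F (j, i)"] fin by simp
  also have "\<dots> = 0"
  proof (rule sum_antisym_form)
    show "finite (SIGMA j:s. s - {j})" using fin by auto
    fix p assume p: "p \<in> (SIGMA j:s. s - {j})"
    then show "prod.swap p \<in> (SIGMA j:s. s - {j})" by auto
    obtain j i where ji: "p = (j, i)" "j \<in> s" "i \<in> s" "i \<noteq> j" using p by auto
    have m1: "a(i := Suc (a i), j := Suc (a j)) = a(j := Suc (a j), i := Suc (a i))"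
      using ji by (simp add: fun_upd_twist)
    have m2: "s - {i} - {j} = s - {j} - {i}" by auto
    have c: "sg s i * sg (s - {i}) j = - (sg s j * sg (s - {j}) i)"
      using ji fin by (simp add: sg_remove)
    show "F (prod.swap p) = - F p"
      unfolding F_def ji(1) by (simp add: m1 m2 c fscale_neg)
  qed
  finally show ?thesis .
qed


lemma dext_d_mono:
  assumes fin: "finite s"
  shows "dext n (d_mono n a s) = 0"
proof -
  define I where "I = {1..n}"
  define F where "F p = fscale (real (a (fst p)) * sg s (fst p) * (real (a (snd p)) * sg (insert (fst p) s) (snd p)))
     (mono (a(fst p := a (fst p) - 1, snd p := a (snd p) - 1)) (insert (snd p) (insert (fst p) s)))" for p
  have "dext n (d_mono n a s) = (\<Sum>i\<in>I - s. fscale (real (a i) * sg s i) (d_mono n (a(i := a i - 1)) (insert i s)))"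
    unfolding d_mono_sg[of n a s] dext_def I_def by (rule lin_ext_sum_mono)
  also have "\<dots> = (\<Sum>i\<in>I - s. \<Sum>i'\<in>I - insert i s. F (i, i'))"
  proof (rule sum.cong[OF refl])
    fix i assume i: "i \<in> I - s"
    have "fscale (real (a i) * sg s i) (d_mono n (a(i := a i - 1)) (insert i s))
       = (\<Sum>i'\<in>I - insert i s. fscale (real (a i) * sg s i) (fscale (real ((a(i := a i - 1)) i') * sg (insert i s) i')
            (mono ((a(i := a i - 1))(i' := (a(i := a i - 1)) i' - 1)) (insert i' (insert i s)))))"
      unfolding d_mono_sg I_def by (simp add: fvs.scale_sum_right)
    also have "\<dots> = (\<Sum>i'\<in>I - insert i s. F (i, i'))"
      by (rule sum.cong[OF refl]) (auto simp: F_def fvs.scale_scale)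
    finally show "fscale (real (a i) * sg s i) (d_mono n (a(i := a i - 1)) (insert i s)) = (\<Sum>i'\<in>I - insert i s. F (i, i'))" .
  qed
  also have "\<dots> = sum F (SIGMA i:I - s. I - insert i s)"
    using sum.Sigma[of "I - s" "\<lambda>i. I - insert i s" "\<lambda>i i'. F (i, i')"] by (simp add: I_def)
  also have "\<dots> = 0"
  proof (rule sum_antisym_form)
    show "finite (SIGMA i:I - s. I - insert i s)" by (auto simp: I_def)
    fix p assume p: "p \<in> (SIGMA i:I - s. I - insert i s)"
    then show "prod.swap p \<in> (SIGMA i:I - s. I - insert i s)" by auto
    obtain i j where ji: "p = (i, j)" "i \<notin> s" "j \<notin> s" "i \<noteq> j" using p by auto
    have m1: "a(j := a j - Suc 0, i := a i - Suc 0) = a(i := a i - Suc 0, j := a j - Suc 0)"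
      using ji by (simp add: fun_upd_twist)
    have m2: "insert i (insert j s) = insert j (insert i s)" by auto
    have c: "real (a j) * sg s j * (real (a i) * sg (insert j s) i) = - (real (a i) * sg s i * (real (a j) * sg (insert i s) j))"
      using ji fin by (simp add: sg_insert)
    show "F (prod.swap p) = - F p"
      unfolding F_def ji(1) by (simp add: m1 m2 c fscale_neg del: insert_commute)
  qed
  finally show ?thesis .
qed


lemma homotopy_mono:
  assumes sI: "s \<subseteq> {1..n}" and aI: "\<forall>i. a i \<noteq> 0 \<longrightarrow> i \<in> {1..n}"
  shows "dext n (kappa_mono a s) + kappa (d_mono n a s)
           = fscale (real ((\<Sum>i\<in>{1..n}. a i) + card s)) (mono a s)"
proof -
  define I where "I = {1..n}"
  have fin: "finite s" using sI finite_subset by blast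
  have finI: "finite I" by (simp add: I_def)
  define X where "X j b = fscale (sg s j * (real (a b) * sg (s - {j}) b))
      (mono (a(j := Suc (a j), b := a b - 1)) (insert b (s - {j})))" for j b
  define Y where "Y b j = fscale (real (a b) * sg s b * sg (insert b s) j)
      (mono (a(b := a b - 1, j := Suc (a j))) (insert b s - {j}))" for b j
  have step1: "dext n (kappa_mono a s) =
      (\<Sum>j\<in>s. fscale (real (Suc (a j))) (mono a s)) + (\<Sum>j\<in>s. \<Sum>b\<in>I - s. X j b)"
  proof -
    have "dext n (kappa_mono a s) = (\<Sum>j\<in>s. fscale (sg s j) (d_mono n (a(j := Suc (a j))) (s - {j})))"
      unfolding kappa_mono_sg[of a s] dext_def by (rule lin_ext_sum_mono)
    also have "\<dots> = (\<Sum>j\<in>s. fscale (real (Suc (a j))) (mono a s) + (\<Sum>b\<in>I - s. X j b))"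
    proof (rule sum.cong[OF refl])
      fix j assume j: "j \<in> s"
      have e: "I - (s - {j}) = insert j (I - s)" using j sI by (auto simp: I_def)
      have "d_mono n (a(j := Suc (a j))) (s - {j}) =
          (\<Sum>b\<in>insert j (I - s). fscale (real ((a(j := Suc (a j))) b) * sg (s - {j}) b)
              (mono ((a(j := Suc (a j)))(b := (a(j := Suc (a j))) b - 1)) (insert b (s - {j}))))"
        unfolding d_mono_sg I_def[symmetric] e ..
      also have "\<dots> = fscale (real (Suc (a j)) * sg s j) (mono a s) +
          (\<Sum>b\<in>I - s. fscale (real (a b) * sg (s - {j}) b)
              (mono (a(j := Suc (a j), b := a b - 1)) (insert b (s - {j}))))"
      proof -
        have "(a(j := Suc (a j)))(j := (a(j := Suc (a j))) j - 1) = a" by (simp add: fun_eq_iff)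
        moreover have "insert j (s - {j}) = s" using j by auto
        moreover have "(\<Sum>b\<in>I - s. fscale (real ((a(j := Suc (a j))) b) * sg (s - {j}) b)
              (mono ((a(j := Suc (a j)))(b := (a(j := Suc (a j))) b - 1)) (insert b (s - {j}))))
          = (\<Sum>b\<in>I - s. fscale (real (a b) * sg (s - {j}) b)
              (mono (a(j := Suc (a j), b := a b - 1)) (insert b (s - {j}))))"
          by (rule sum.cong[OF refl]) (use j in auto)
        ultimately show ?thesis using j finI by (simp add: sg_remove_self)
      qed
      finally have "fscale (sg s j) (d_mono n (a(j := Suc (a j))) (s - {j})) =
          fscale (sg s j) (fscale (real (Suc (a j)) * sg s j) (mono a s)) +
          (\<Sum>b\<in>I - s. fscale (sg s j) (fscale (real (a b) * sg (s - {j}) b)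
              (mono (a(j := Suc (a j), b := a b - 1)) (insert b (s - {j})))))"
        by (simp add: fvs.scale_right_distrib fvs.scale_sum_right)
      also have "\<dots> = fscale (real (Suc (a j))) (mono a s) + (\<Sum>b\<in>I - s. X j b)"
      proof -
        have "sg s j * (real (Suc (a j)) * sg s j) = real (Suc (a j))"
          using sg_sq[of s j] by (simp add: algebra_simps)
        then show ?thesis by (simp add: fvs.scale_scale X_def del: of_nat_Suc)
      qed
      finally show "fscale (sg s j) (d_mono n (a(j := Suc (a j))) (s - {j})) =
          fscale (real (Suc (a j))) (mono a s) + (\<Sum>b\<in>I - s. X j b)" .
    qed
    also have "\<dots> = (\<Sum>j\<in>s. fscale (real (Suc (a j))) (mono a s)) + (\<Sum>j\<in>s. \<Sum>b\<in>I - s. X j b)"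
      by (rule sum.distrib)
    finally show ?thesis .
  qed
  have step2: "kappa (d_mono n a s) =
      (\<Sum>b\<in>I - s. fscale (real (a b)) (mono a s)) + (\<Sum>b\<in>I - s. \<Sum>j\<in>s. Y b j)"
  proof -
    have "kappa (d_mono n a s) = (\<Sum>b\<in>I - s. fscale (real (a b) * sg s b) (kappa_mono (a(b := a b - 1)) (insert b s)))"
      unfolding d_mono_sg[of n a s] kappa_def I_def by (rule lin_ext_sum_mono)
    also have "\<dots> = (\<Sum>b\<in>I - s. fscale (real (a b)) (mono a s) + (\<Sum>j\<in>s. Y b j))"
    proof (rule sum.cong[OF refl])
      fix b assume b: "b \<in> I - s"
      have "kappa_mono (a(b := a b - 1)) (insert b s) =
          (\<Sum>j\<in>insert b s. fscale (sg (insert b s) j)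
             (mono ((a(b := a b - 1))(j := Suc ((a(b := a b - 1)) j))) (insert b s - {j})))"
        unfolding kappa_mono_sg ..
      also have "\<dots> = fscale (sg s b) (mono ((a(b := a b - 1))(b := Suc (a b - 1))) s) +
          (\<Sum>j\<in>s. fscale (sg (insert b s) j)
             (mono (a(b := a b - 1, j := Suc (a j))) (insert b s - {j})))"
      proof -
        have "insert b s - {b} = s" using b by auto
        moreover have "(\<Sum>j\<in>s. fscale (sg (insert b s) j)
             (mono ((a(b := a b - 1))(j := Suc ((a(b := a b - 1)) j))) (insert b s - {j})))
          = (\<Sum>j\<in>s. fscale (sg (insert b s) j)
             (mono (a(b := a b - 1, j := Suc (a j))) (insert b s - {j})))"
          by (rule sum.cong[OF refl]) (use b in auto)
        ultimately show ?thesis using b fin by (simp add: sg_insert_self)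
      qed
      finally have "fscale (real (a b) * sg s b) (kappa_mono (a(b := a b - 1)) (insert b s)) =
          fscale (real (a b) * sg s b) (fscale (sg s b) (mono ((a(b := a b - 1))(b := Suc (a b - 1))) s)) +
          (\<Sum>j\<in>s. fscale (real (a b) * sg s b) (fscale (sg (insert b s) j)
             (mono (a(b := a b - 1, j := Suc (a j))) (insert b s - {j}))))"
        by (simp add: fvs.scale_right_distrib fvs.scale_sum_right)
      also have "\<dots> = fscale (real (a b)) (mono a s) + (\<Sum>j\<in>s. Y b j)"
      proof -
        have "fscale (real (a b) * sg s b) (fscale (sg s b) (mono ((a(b := a b - 1))(b := Suc (a b - 1))) s))
            = fscale (real (a b)) (mono a s)"
        proof (cases "a b = 0")
          case True then show ?thesis by simp
        next
          case False
          then have "(a(b := a b - 1))(b := Suc (a b - 1)) = a" by (simp add: fun_eq_iff)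
          moreover have "real (a b) * sg s b * sg s b = real (a b)"
            using sg_sq[of s b] by (simp add: algebra_simps)
          ultimately show ?thesis by (simp add: fvs.scale_scale)
        qed
        then show ?thesis by (simp add: fvs.scale_scale Y_def)
      qed
      finally show "fscale (real (a b) * sg s b) (kappa_mono (a(b := a b - 1)) (insert b s)) =
          fscale (real (a b)) (mono a s) + (\<Sum>j\<in>s. Y b j)" .
    qed
    also have "\<dots> = (\<Sum>b\<in>I - s. fscale (real (a b)) (mono a s)) + (\<Sum>b\<in>I - s. \<Sum>j\<in>s. Y b j)"
      by (rule sum.distrib)
    finally show ?thesis .
  qed
  have step3: "(\<Sum>j\<in>s. \<Sum>b\<in>I - s. X j b) + (\<Sum>b\<in>I - s. \<Sum>j\<in>s. Y b j) = 0"
  proof -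
    have "(\<Sum>b\<in>I - s. \<Sum>j\<in>s. Y b j) = (\<Sum>j\<in>s. \<Sum>b\<in>I - s. Y b j)" by (rule sum.swap)
    then have "(\<Sum>j\<in>s. \<Sum>b\<in>I - s. X j b) + (\<Sum>b\<in>I - s. \<Sum>j\<in>s. Y b j)
        = (\<Sum>j\<in>s. \<Sum>b\<in>I - s. X j b + Y b j)" by (simp add: sum.distrib)
    also have "\<dots> = 0"
    proof (intro sum.neutral ballI)
      fix j b assume j: "j \<in> s" and b: "b \<in> I - s"
      then have jb: "j \<noteq> b" by auto
      have m1: "a(b := a b - Suc 0, j := Suc (a j)) = a(j := Suc (a j), b := a b - Suc 0)"
        using jb by (simp add: fun_upd_twist)
      have m2: "insert b s - {j} = insert b (s - {j})" using jb by auto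
      have c: "real (a b) * sg s b * sg (insert b s) j = - (sg s j * (real (a b) * sg (s - {j}) b))"
        using j b jb fin by (auto simp: sg_remove sg_insert)
      show "X j b + Y b j = 0"
        unfolding X_def Y_def by (simp add: m1 m2 c fscale_neg)
    qed
    finally show ?thesis .
  qed
  have step4: "(\<Sum>j\<in>s. fscale (real (Suc (a j))) (mono a s)) + (\<Sum>b\<in>I - s. fscale (real (a b)) (mono a s))
      = fscale (real ((\<Sum>i\<in>{1..n}. a i) + card s)) (mono a s)"
  proof -
    have "sum a I = sum a (I - s) + sum a s"
      using sum.subset_diff[OF sI[folded I_def] finI] by simp
    then have "(\<Sum>j\<in>s. real (Suc (a j))) + (\<Sum>b\<in>I - s. real (a b)) = real ((\<Sum>i\<in>{1..n}. a i) + card s)"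
      unfolding I_def[symmetric] by (simp add: sum.distrib)
    then show ?thesis
      by (simp add: fvs.scale_sum_left[symmetric] fvs.scale_left_distrib[symmetric] del: of_nat_Suc)
  qed
  show ?thesis
    using step1 step2 step3 step4 by (simp add: algebra_simps)
qed


definition World :: "nat \<Rightarrow> ((nat \<Rightarrow> nat) \<times> nat set) set" where
  "World n = {(a, s). (\<forall>i. a i \<noteq> 0 \<longrightarrow> i \<in> {1..n}) \<and> s \<subseteq> {1..n}}"

definition deg :: "nat \<Rightarrow> (nat \<Rightarrow> nat) \<times> nat set \<Rightarrow> nat" where
  "deg n m = (\<Sum>i\<in>{1..n}. fst m i)"

definition Nw :: "nat \<Rightarrow> (nat \<Rightarrow> nat) \<times> nat set \<Rightarrow> real" where
  "Nw n m = real (deg n m + card (snd m))"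

lemma Mon_World: "Mon n r k \<subseteq> World n"
  by (auto simp: Mon_def World_def)

lemma Mon_alt: "Mon n r k = {m \<in> World n. int (deg n m) = r \<and> int (card (snd m)) = k}"
  by (auto simp: Mon_def World_def deg_def)

lemma lin_ext_sum_scale:
  assumes "\<And>x. x \<in> A \<Longrightarrow> h x \<in> Fin"
  shows "lin_ext g (\<Sum>x\<in>A. fscale (c x) (h x)) = (\<Sum>x\<in>A. fscale (c x) (lin_ext g (h x)))"
proof -
  have "lin_ext g (\<Sum>x\<in>A. fscale (c x) (h x)) = (\<Sum>x\<in>A. lin_ext g (fscale (c x) (h x)))"
    by (rule lin_ext_sum) (use assms fvs.subspace_scale[OF Fin_subspace] in blast)
  also have "\<dots> = (\<Sum>x\<in>A. fscale (c x) (lin_ext g (h x)))"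
    using assms by (simp add: lin_ext_scale)
  finally show ?thesis .
qed

lemma kappa_expand:
  assumes "f \<in> Fin"
  shows "kappa f = (\<Sum>m\<in>supp f. fscale (f m) (kappa_mono (fst m) (snd m)))"
  unfolding kappa_def by (rule lin_ext_eq) (use assms in \<open>auto simp: Fin_def\<close>)

lemma dext_expand:
  assumes "f \<in> Fin"
  shows "dext n f = (\<Sum>m\<in>supp f. fscale (f m) (d_mono n (fst m) (snd m)))"
  unfolding dext_def by (rule lin_ext_eq) (use assms in \<open>auto simp: Fin_def\<close>)

lemma World_fin: "m \<in> World n \<Longrightarrow> finite (snd m)"
  unfolding World_def using finite_subset[of _ "{1..n}"] by auto

lemma kappa_kappa:
  assumes "f \<in> Fin" "supp f \<subseteq> World n"
  shows "kappa (kappa f) = 0"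
proof -
  have "kappa (kappa f) = (\<Sum>m\<in>supp f. fscale (f m) (kappa (kappa_mono (fst m) (snd m))))"
    unfolding kappa_expand[OF assms(1)] kappa_def[symmetric]
    by (rule lin_ext_sum_scale[of _ _ kappa_mono, folded kappa_def]) (rule kappa_mono_Fin)
  also have "\<dots> = 0"
    by (rule sum.neutral) (use assms World_fin kappa_kappa_mono in auto)
  finally show ?thesis .
qed

lemma dext_dext:
  assumes "f \<in> Fin" "supp f \<subseteq> World n"
  shows "dext n (dext n f) = 0"
proof -
  have "dext n (dext n f) = (\<Sum>m\<in>supp f. fscale (f m) (dext n (d_mono n (fst m) (snd m))))"
    unfolding dext_expand[OF assms(1)]
    by (rule lin_ext_sum_scale[of _ _ "d_mono n", folded dext_def]) (rule d_mono_Fin)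
  also have "\<dots> = 0"
    by (rule sum.neutral) (use assms World_fin dext_d_mono in auto)
  finally show ?thesis .
qed

lemma homotopy:
  assumes "f \<in> Fin" "supp f \<subseteq> World n"
  shows "dext n (kappa f) + kappa (dext n f) = (\<lambda>m. Nw n m * f m)"
proof -
  have fin: "finite (supp f)" using assms by (simp add: Fin_def)
  have "dext n (kappa f) = (\<Sum>m\<in>supp f. fscale (f m) (dext n (kappa_mono (fst m) (snd m))))"
    unfolding kappa_expand[OF assms(1)]
    by (rule lin_ext_sum_scale[of _ _ "d_mono n", folded dext_def]) (rule kappa_mono_Fin)
  moreover have "kappa (dext n f) = (\<Sum>m\<in>supp f. fscale (f m) (kappa (d_mono n (fst m) (snd m))))"
    unfolding dext_expand[OF assms(1)]
    by (rule lin_ext_sum_scale[of _ _ kappa_mono, folded kappa_def]) (rule d_mono_Fin)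
  ultimately have "dext n (kappa f) + kappa (dext n f) =
     (\<Sum>m\<in>supp f. fscale (f m) (dext n (kappa_mono (fst m) (snd m)) + kappa (d_mono n (fst m) (snd m))))"
    by (simp add: sum.distrib fvs.scale_right_distrib)
  also have "\<dots> = (\<Sum>m\<in>supp f. fscale (f m) (fscale (Nw n m) (mn m)))"
  proof (rule sum.cong[OF refl])
    fix m assume "m \<in> supp f"
    then have "m \<in> World n" using assms by auto
    then show "fscale (f m) (dext n (kappa_mono (fst m) (snd m)) + kappa (d_mono n (fst m) (snd m))) =
      fscale (f m) (fscale (Nw n m) (mn m))"
      using homotopy_mono[of "snd m" n "fst m"]
      by (cases m) (simp add: World_def Nw_def deg_def mn_def)
  qed
  also have "\<dots> = (\<lambda>m. Nw n m * f m)"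
  proof
    fix x
    have "(\<Sum>m\<in>supp f. fscale (f m) (fscale (Nw n m) (mn m))) x = (\<Sum>m\<in>supp f. (if m = x then f m * Nw n m else 0))"
      by (auto simp: sum_apply_form mn_apply intro!: sum.cong)
    also have "\<dots> = Nw n x * f x" using fin by (simp add: sum.delta supp_def)
    finally show "(\<Sum>m\<in>supp f. fscale (f m) (fscale (Nw n m) (mn m))) x = Nw n x * f x" .
  qed
  finally show ?thesis .
qed


lemma sum_upd_nat:
  assumes "finite I" "j \<in> I"
  shows "sum (a(j := v)) I + a j = sum a I + (v::nat)"
proof -
  have "sum (a(j := v)) I = (a(j := v)) j + sum (a(j := v)) (I - {j})"
    by (rule sum.remove[OF assms])
  then have "sum (a(j := v)) I = v + sum (a(j := v)) (I - {j})" by simp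
  moreover have "sum (a(j := v)) (I - {j}) = sum a (I - {j})"
    by (rule sum.cong) auto
  moreover have "sum a I = a j + sum a (I - {j})" using sum.remove[OF assms] by simp
  ultimately show ?thesis by simp
qed

lemma supp_sum: "supp (\<Sum>x\<in>A. h x) \<subseteq> (\<Union>x\<in>A. supp (h x))"
proof (induction A rule: infinite_finite_induct)
  case (insert x F)
  from insert(1,2) have e: "sum h (insert x F) = h x + sum h F" by (rule sum.insert)
  show ?case unfolding e using supp_add[of "h x" "sum h F"] insert(3) by blast
qed (auto simp: supp_def)

lemma supp_sum_scale: "supp (\<Sum>x\<in>A. fscale (c x) (h x)) \<subseteq> (\<Union>x\<in>{x\<in>A. c x \<noteq> 0}. supp (h x))"
proof -
  have "supp (\<Sum>x\<in>A. fscale (c x) (h x)) \<subseteq> (\<Union>x\<in>A. supp (fscale (c x) (h x)))" by (rule supp_sum)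
  moreover have "\<And>x. x \<in> A \<Longrightarrow> supp (fscale (c x) (h x)) \<subseteq> (\<Union>x\<in>{x\<in>A. c x \<noteq> 0}. supp (h x))"
    by (auto simp: supp_def)
  ultimately show ?thesis by blast
qed

lemma supp_mono: "supp (mono b t) = {(b, t)}"
  by (simp add: mono_mn supp_mn)

lemma World_Mon: "m \<in> World n \<Longrightarrow> m \<in> Mon n (int (deg n m)) (int (card (snd m)))"
  by (simp add: Mon_alt)

lemma kappa_mono_supp:
  assumes "(a, s) \<in> Mon n r k"
  shows "supp (kappa_mono a s) \<subseteq> Mon n (r + 1) (k - 1)"
proof -
  have aw: "\<forall>i. a i \<noteq> 0 \<longrightarrow> i \<in> {1..n}" "s \<subseteq> {1..n}" "int (sum a {1..n}) = r" "int (card s) = k"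
    using assms by (auto simp: Mon_def)
  have fs: "finite s" using aw(2) finite_subset by blast
  { fix j assume j: "j \<in> s"
    have jI: "j \<in> {1..n}" using j aw(2) by auto
    have "sum (a(j := Suc (a j))) {1..n} + a j = sum a {1..n} + Suc (a j)"
      by (rule sum_upd_nat[OF _ jI]) simp
    then have 1: "int (sum (a(j := Suc (a j))) {1..n}) = r + 1" using aw(3) by simp
    have "card s \<ge> 1" using j fs card_0_eq[OF fs] by (cases "card s") auto
    then have 2: "int (card (s - {j})) = k - 1" using j fs aw(4) by (simp add: of_nat_diff)
    have "(a(j := Suc (a j)), s - {j}) \<in> Mon n (r + 1) (k - 1)"
      unfolding Mon_def using 1 2 aw jI by auto }
  then show ?thesis
    unfolding kappa_mono_sg using supp_sum_scale[of "\<lambda>j. sg s j" "\<lambda>j. mono (a(j := Suc (a j))) (s - {j})" s]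
    by (auto simp: supp_mono)
qed

lemma d_mono_supp:
  assumes "(a, s) \<in> Mon n r k"
  shows "supp (d_mono n a s) \<subseteq> Mon n (r - 1) (k + 1)"
proof -
  have aw: "\<forall>i. a i \<noteq> 0 \<longrightarrow> i \<in> {1..n}" "s \<subseteq> {1..n}" "int (sum a {1..n}) = r" "int (card s) = k"
    using assms by (auto simp: Mon_def)
  have fs: "finite s" using aw(2) finite_subset by blast
  { fix i assume i: "i \<in> {1..n} - s" "real (a i) * sg s i \<noteq> 0"
    have ai: "a i \<noteq> 0" using i by auto
    have "sum (a(i := a i - 1)) {1..n} + a i = sum a {1..n} + (a i - 1)"
      by (rule sum_upd_nat) (use i in auto)
    then have "sum (a(i := a i - 1)) {1..n} + 1 = sum a {1..n}" using ai by arith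
    then have "int (sum (a(i := a i - 1)) {1..n} + 1) = int (sum a {1..n})" by (rule arg_cong)
    then have "int (sum (a(i := a i - 1)) {1..n}) + 1 = int (sum a {1..n})" by (simp only: of_nat_add of_nat_1)
    then have 1: "int (sum (a(i := a i - 1)) {1..n}) = r - 1" using aw(3) by linarith
    have 2: "int (card (insert i s)) = k + 1" using i fs aw(4) by simp
    have "(a(i := a i - 1), insert i s) \<in> Mon n (r - 1) (k + 1)"
      unfolding Mon_def using 1 2 aw i by auto }
  then show ?thesis
    unfolding d_mono_sg
    using supp_sum_scale[of "\<lambda>i. real (a i) * sg s i" "\<lambda>i. mono (a(i := a i - 1)) (insert i s)" "{1..n} - s"]
    by (auto simp: supp_mono)
qed

lemma kappa_supp:
  assumes "f \<in> Fin" "supp f \<subseteq> Mon n r k"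
  shows "supp (kappa f) \<subseteq> Mon n (r + 1) (k - 1)"
  using supp_sum_scale[of f "\<lambda>m. kappa_mono (fst m) (snd m)" "supp f"] kappa_mono_supp assms
  unfolding kappa_expand[OF assms(1)] by fastforce

lemma dext_supp:
  assumes "f \<in> Fin" "supp f \<subseteq> Mon n r k"
  shows "supp (dext n f) \<subseteq> Mon n (r - 1) (k + 1)"
  using supp_sum_scale[of f "\<lambda>m. d_mono n (fst m) (snd m)" "supp f"] d_mono_supp assms
  unfolding dext_expand[OF assms(1)] by fastforce

lemma kappa_World:
  assumes "f \<in> Fin" "supp f \<subseteq> World n"
  shows "supp (kappa f) \<subseteq> World n"
proof -
  { fix m assume "m \<in> supp f"
    then have "m \<in> Mon n (int (deg n m)) (int (card (snd m)))" using assms World_Mon by blast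
    then have "supp (kappa_mono (fst m) (snd m)) \<subseteq> World n"
      using kappa_mono_supp[of "fst m" "snd m"] Mon_World by (metis prod.collapse subset_trans) }
  then show ?thesis
    using supp_sum_scale[of f "\<lambda>m. kappa_mono (fst m) (snd m)" "supp f"]
    unfolding kappa_expand[OF assms(1)] by blast
qed

lemma dext_World:
  assumes "f \<in> Fin" "supp f \<subseteq> World n"
  shows "supp (dext n f) \<subseteq> World n"
proof -
  { fix m assume "m \<in> supp f"
    then have "m \<in> Mon n (int (deg n m)) (int (card (snd m)))" using assms World_Mon by blast
    then have "supp (d_mono n (fst m) (snd m)) \<subseteq> World n"
      using d_mono_supp[of "fst m" "snd m"] Mon_World by (metis prod.collapse subset_trans) }
  then show ?thesis
    using supp_sum_scale[of f "\<lambda>m. d_mono n (fst m) (snd m)" "supp f"]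
    unfolding dext_expand[OF assms(1)] by blast
qed

lemma finite_funs:
  assumes "finite I"
  shows "finite {a::nat \<Rightarrow> nat. (\<forall>i. a i \<noteq> 0 \<longrightarrow> i \<in> I) \<and> (\<forall>i. a i \<le> N)}"
proof -
  have "{a::nat \<Rightarrow> nat. (\<forall>i. a i \<noteq> 0 \<longrightarrow> i \<in> I) \<and> (\<forall>i. a i \<le> N)}
      \<subseteq> (\<lambda>g i. if i \<in> I then g i else 0) ` (I \<rightarrow>\<^sub>E {0..N})"
  proof
    fix a assume a: "a \<in> {a::nat \<Rightarrow> nat. (\<forall>i. a i \<noteq> 0 \<longrightarrow> i \<in> I) \<and> (\<forall>i. a i \<le> N)}"
    have "a = (\<lambda>i. if i \<in> I then restrict a I i else 0)" using a by (auto simp: fun_eq_iff)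
    moreover have "restrict a I \<in> I \<rightarrow>\<^sub>E {0..N}" using a by auto
    ultimately show "a \<in> (\<lambda>g i. if i \<in> I then g i else 0) ` (I \<rightarrow>\<^sub>E {0..N})" by blast
  qed
  moreover have "finite (I \<rightarrow>\<^sub>E {0..N})" using assms by (simp add: finite_PiE)
  ultimately show ?thesis using finite_subset by blast
qed

lemma finite_Mon: "finite (Mon n r k)"
proof -
  let ?A = "{a::nat \<Rightarrow> nat. (\<forall>i. a i \<noteq> 0 \<longrightarrow> i \<in> {1..n}) \<and> (\<forall>i. a i \<le> nat r)}"
  have "Mon n r k \<subseteq> ?A \<times> Pow {1..n}"
  proof
    fix m assume m: "m \<in> Mon n r k"
    obtain a s where as: "m = (a, s)" by fastforce
    have h: "\<forall>i. a i \<noteq> 0 \<longrightarrow> i \<in> {1..n}" "s \<subseteq> {1..n}" "int (sum a {1..n}) = r"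
      using m as by (auto simp: Mon_def)
    have "\<forall>i. a i \<le> nat r"
    proof
      fix i show "a i \<le> nat r"
      proof (cases "i \<in> {1..n}")
        case True
        then have "a i \<le> sum a {1..n}" by (intro member_le_sum) auto
        moreover have "sum a {1..n} = nat r" using h(3) by (metis nat_int)
        ultimately show ?thesis by simp
      next
        case False
        then have "a i = 0" using h(1) by blast
        then show ?thesis by simp
      qed
    qed
    then show "m \<in> ?A \<times> Pow {1..n}" using h as by auto
  qed
  moreover have "finite (?A \<times> Pow {1..n})" using finite_funs[of "{1..n}" "nat r"] by simp
  ultimately show ?thesis using finite_subset by blast
qed


lemma mn_eta: "(\<lambda>m. mono (fst m) (snd m)) = mn"
  by (simp add: fun_eq_iff mn_def)

lemma span_Un_span: "fspan (fspan A \<union> fspan B) = fspan (A \<union> B)"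
  unfolding fvs.span_eq
proof
  show "fspan A \<union> fspan B \<subseteq> fspan (A \<union> B)"
    using fvs.span_mono[of A "A \<union> B"] fvs.span_mono[of B "A \<union> B"] by blast
  show "A \<union> B \<subseteq> fspan (fspan A \<union> fspan B)"
    using fvs.span_superset[of A] fvs.span_superset[of B] fvs.span_superset[of "fspan A \<union> fspan B"] by blast
qed

lemma span_Un_span3: "fspan (fspan A \<union> fspan B \<union> fspan C) = fspan (A \<union> B \<union> C)"
proof -
  have "fspan (fspan A \<union> fspan B \<union> fspan C) = fspan (fspan (fspan A \<union> fspan B) \<union> fspan (fspan C))"
    by (rule span_Un_span[symmetric])
  also have "\<dots> = fspan (fspan (A \<union> B) \<union> fspan C)" by (simp add: span_Un_span fvs.span_span)
  also have "\<dots> = fspan (A \<union> B \<union> C)" by (rule span_Un_span)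
  finally show ?thesis .
qed

lemma span_UN_span: "fspan (\<Union>i\<in>I. fspan (A i)) = fspan (\<Union>i\<in>I. A i)"
  unfolding fvs.span_eq
proof
  show "(\<Union>i\<in>I. fspan (A i)) \<subseteq> fspan (\<Union>i\<in>I. A i)"
  proof
    fix x assume "x \<in> (\<Union>i\<in>I. fspan (A i))"
    then obtain i where "i \<in> I" "x \<in> fspan (A i)" by auto
    moreover have "A i \<subseteq> (\<Union>i\<in>I. A i)" using \<open>i \<in> I\<close> by blast
    ultimately show "x \<in> fspan (\<Union>i\<in>I. A i)" using fvs.span_mono[of "A i" "\<Union>i\<in>I. A i"] by (meson subsetD)
  qed
  show "(\<Union>i\<in>I. A i) \<subseteq> fspan (\<Union>i\<in>I. fspan (A i))"
  proof
    fix x assume "x \<in> (\<Union>i\<in>I. A i)"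
    then obtain i where "i \<in> I" "x \<in> A i" by auto
    then have "x \<in> fspan (A i)" using fvs.span_base by blast
    then have "x \<in> (\<Union>i\<in>I. fspan (A i))" using \<open>i \<in> I\<close> by blast
    then show "x \<in> fspan (\<Union>i\<in>I. fspan (A i))" by (rule fvs.span_base)
  qed
qed

lemma img_span: "A \<subseteq> Fin \<Longrightarrow> lin_ext g ` fspan A = fspan (lin_ext g ` A)"
  by (rule span_image_lin[symmetric])

lemma mn_Fin_set[simp]: "mn ` M \<subseteq> Fin" by auto

lemma kappa_Fin_set[simp]: "kappa ` X \<subseteq> Fin" using kappa_Fin by auto
lemma dext_Fin_set[simp]: "dext n ` X \<subseteq> Fin" using dext_Fin by auto

lemma H_char: "H n r k = fspan (mn ` Mon n r k)"
  unfolding H_def mn_eta ..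

lemma H_supp: "H n r k = {f. supp f \<subseteq> Mon n r k}"
  by (simp add: H_char span_mn_char finite_Mon)

lemma Hl_char: "Hl n r l k = fspan (mn ` {m\<in>Mon n r k. ldeg n m \<ge> l})"
  unfolding Hl_def mn_eta ..

lemma P_char: "P n r k = fspan (mn ` (\<Union>j\<in>{0..r}. Mon n j k))"
proof -
  have "P n r k = fspan (\<Union>j\<in>{0..r}. fspan (mn ` Mon n j k))"
    by (simp add: P_def H_char)
  also have "\<dots> = fspan (\<Union>j\<in>{0..r}. mn ` Mon n j k)" by (rule span_UN_span)
  finally show ?thesis by (simp add: image_UN)
qed

definition LM :: "nat \<Rightarrow> int \<Rightarrow> int \<Rightarrow> ((nat \<Rightarrow> nat) \<times> nat set) set" where
  "LM n r k = (\<Union>l\<in>{1::nat..}. {m\<in>Mon n (r + int l - 1) (k + 1). ldeg n m \<ge> l})"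

definition GJ :: "nat \<Rightarrow> int \<Rightarrow> int \<Rightarrow> form set" where
  "GJ n r k = kappa ` mn ` LM n r k"

definition GP :: "nat \<Rightarrow> int \<Rightarrow> int \<Rightarrow> form set" where
  "GP n r k = mn ` (\<Union>j\<in>{0..r}. Mon n j k)"

lemma ldeg_le: "ldeg n m \<le> n"
proof -
  have "ldeg n m \<le> card {1..n}" unfolding ldeg_def by (rule card_mono) auto
  then show ?thesis by simp
qed

lemma finite_LM: "finite (LM n r k)"
proof -
  have "LM n r k \<subseteq> (\<Union>l\<in>{1..n}. Mon n (r + int l - 1) (k + 1))"
  proof
    fix m assume "m \<in> LM n r k"
    then obtain l where l: "l \<ge> 1" "m \<in> Mon n (r + int l - 1) (k + 1)" "ldeg n m \<ge> l"
      unfolding LM_def by auto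
    then have "l \<in> {1..n}" using ldeg_le[of n m] by auto
    then show "m \<in> (\<Union>l\<in>{1..n}. Mon n (r + int l - 1) (k + 1))" using l by blast
  qed
  moreover have "finite (\<Union>l\<in>{1..n}. Mon n (r + int l - 1) (k + 1))"
    by (rule finite_UN_I) (simp_all add: finite_Mon)
  ultimately show ?thesis by (rule finite_subset)
qed

lemma finite_GJ: "finite (GJ n r k)" by (simp add: GJ_def finite_LM)
lemma finite_GP: "finite (GP n r k)" by (simp add: GP_def finite_Mon)

lemma GJ_Fin: "GJ n r k \<subseteq> Fin" by (simp add: GJ_def)
lemma GP_Fin: "GP n r k \<subseteq> Fin" by (simp add: GP_def)

lemma J_char: "J n r k = fspan (GJ n r k)"
proof -
  have "J n r k = fspan (\<Union>l\<in>{1::nat..}. kappa ` fspan (mn ` {m\<in>Mon n (r + int l - 1) (k + 1). ldeg n m \<ge> l}))"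
    by (simp add: J_def Hl_char)
  also have "\<dots> = fspan (\<Union>l\<in>{1::nat..}. fspan (kappa ` mn ` {m\<in>Mon n (r + int l - 1) (k + 1). ldeg n m \<ge> l}))"
    unfolding kappa_def by (simp add: img_span)
  also have "\<dots> = fspan (\<Union>l\<in>{1::nat..}. kappa ` mn ` {m\<in>Mon n (r + int l - 1) (k + 1). ldeg n m \<ge> l})"
    by (rule span_UN_span)
  also have "\<dots> = fspan (GJ n r k)"
    unfolding GJ_def LM_def by (simp add: image_UN)
  finally show ?thesis .
qed

lemma P_char': "P n r k = fspan (GP n r k)"
  by (simp add: P_char GP_def)

lemma Pminus_char: "Pminus n r k = fspan (GP n (r - 1) k \<union> kappa ` mn ` Mon n (r - 1) (k + 1))"
proof -
  have "Pminus n r k = fspan (fspan (GP n (r - 1) k) \<union> fspan (kappa ` mn ` Mon n (r - 1) (k + 1)))"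
    unfolding Pminus_def P_char' H_char kappa_def by (simp add: img_span)
  then show ?thesis by (simp add: span_Un_span)
qed

lemma S_char: "S n r k = fspan (GP n r k \<union> GJ n r k \<union> dext n ` GJ n (r + 1) (k - 1))"
proof -
  have "S n r k = fspan (fspan (GP n r k) \<union> fspan (GJ n r k) \<union> fspan (dext n ` GJ n (r + 1) (k - 1)))"
    unfolding S_def P_char' J_char dext_def by (simp add: img_span[OF GJ_Fin])
  then show ?thesis by (simp only: span_Un_span3)
qed

lemma Sminus_char: "Sminus n r k = fspan (GP n (r - 1) k \<union> GJ n (r - 1) k \<union> dext n ` GJ n r (k - 1)
   \<union> kappa ` GP n (r - 1) (k + 1) \<union> kappa ` GJ n (r - 1) (k + 1) \<union> kappa ` dext n ` GJ n r k)"
proof -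
  have "Sminus n r k = fspan (fspan (GP n (r - 1) k \<union> GJ n (r - 1) k \<union> dext n ` GJ n r (k - 1))
      \<union> fspan (kappa ` (GP n (r - 1) (k + 1) \<union> GJ n (r - 1) (k + 1) \<union> dext n ` GJ n r k)))"
    unfolding Sminus_def S_char kappa_def
    by (subst img_span) (use GP_Fin GJ_Fin dext_Fin_set in \<open>auto simp: kappa_def[symmetric]\<close>)
  then show ?thesis by (simp add: span_Un_span Un_assoc image_Un)
qed


definition FW :: "nat \<Rightarrow> form set" where
  "FW n = {x. x \<in> Fin \<and> supp x \<subseteq> World n}"

definition KI :: "nat \<Rightarrow> form set" where
  "KI n = kappa ` FW n"

lemma FW_subspace: "fvs.subspace (FW n)"
proof -
  have "FW n = Fin \<inter> {x. supp x \<subseteq> World n}" by (auto simp: FW_def)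
  then show ?thesis using fvs.subspace_inter[OF Fin_subspace supp_sub_subspace] by simp
qed

lemma KI_subspace: "fvs.subspace (KI n)"
proof -
  have "FW n \<subseteq> Fin" by (auto simp: FW_def)
  then have "fspan (kappa ` FW n) = kappa ` fspan (FW n)"
    unfolding kappa_def by (rule span_image_lin)
  also have "\<dots> = kappa ` FW n" by (simp add: fvs.span_eq_iff[THEN iffD2, OF FW_subspace])
  finally show ?thesis unfolding KI_def by (metis fvs.subspace_span)
qed

lemma KI_props:
  assumes "y \<in> KI n"
  shows "y \<in> Fin" "supp y \<subseteq> World n" "kappa y = 0"
proof -
  obtain x where x: "x \<in> Fin" "supp x \<subseteq> World n" "y = kappa x"
    using assms by (auto simp: KI_def FW_def)
  show "y \<in> Fin" using x kappa_Fin by simp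
  show "supp y \<subseteq> World n" using x kappa_World by simp
  show "kappa y = 0" using x kappa_kappa by simp
qed

lemma kappa_mn_KI: "m \<in> World n \<Longrightarrow> kappa (mn m) \<in> KI n"
  unfolding KI_def FW_def by (auto simp: supp_mn)

lemma core:
  assumes "y \<in> KI n" "dext n y = 0" "supp y \<subseteq> {m. deg n m \<ge> 1}"
  shows "y = 0"
proof -
  have h: "dext n (kappa y) + kappa (dext n y) = (\<lambda>m. Nw n m * y m)"
    using homotopy KI_props[OF assms(1)] by blast
  have "dext n (kappa y) + kappa (dext n y) = 0"
    using KI_props(3)[OF assms(1)] assms(2) by (simp add: dext_def kappa_def)
  then have z: "\<And>m. Nw n m * y m = 0" using h by (metis zero_fun_apply)
  show ?thesis
  proof
    fix m show "y m = 0 m"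
    proof (cases "m \<in> supp y")
      case True
      then have "Nw n m > 0" using assms(3) by (auto simp: Nw_def)
      then show ?thesis using z[of m] by simp
    next
      case False then show ?thesis by (simp add: supp_def)
    qed
  qed
qed

lemma homog:
  assumes "supp y \<subseteq> Mon n s j"
  shows "(\<lambda>m. Nw n m * y m) = fscale (of_int (s + j)) y"
proof
  fix m show "Nw n m * y m = fscale (of_int (s + j)) y m"
  proof (cases "m \<in> supp y")
    case True
    then have "m \<in> Mon n s j" using assms by auto
    then have "Nw n m = of_int (s + j)" by (auto simp: Nw_def Mon_alt)
    then show ?thesis by simp
  next
    case False then show ?thesis by (simp add: supp_def)
  qed
qed

lemma kappa_dext_gen:
  assumes "m \<in> Mon n s j"
  shows "kappa (dext n (kappa (mn m))) = fscale (of_int (s + j)) (kappa (mn m))"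
proof -
  let ?g = "kappa (mn m)"
  have gK: "?g \<in> KI n" using assms(1) Mon_World kappa_mn_KI by blast
  have sg: "supp ?g \<subseteq> Mon n (s + 1) (j - 1)"
    using kappa_supp[of "mn m" n s j] assms(1) by (simp add: supp_mn)
  have "dext n (kappa ?g) + kappa (dext n ?g) = (\<lambda>m. Nw n m * ?g m)"
    using homotopy KI_props[OF gK] by blast
  also have "\<dots> = fscale (of_int (s + j)) ?g" using homog[OF sg] by simp
  finally have "dext n (kappa ?g) + kappa (dext n ?g) = fscale (of_int (s + j)) ?g" .
  moreover have "dext n (kappa ?g) = 0" using KI_props(3)[OF gK] by (simp add: dext_def)
  ultimately show ?thesis by simp
qed


lemma LM_D: "m \<in> LM n r k \<Longrightarrow> \<exists>l::nat. l \<ge> 1 \<and> m \<in> Mon n (r + int l - 1) (k + 1) \<and> ldeg n m \<ge> l"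
  unfolding LM_def by auto

lemma LM_I: "l \<ge> 1 \<Longrightarrow> m \<in> Mon n (r + int l - 1) (k + 1) \<Longrightarrow> ldeg n m \<ge> l \<Longrightarrow> m \<in> LM n r k"
  unfolding LM_def by auto

lemma span_supp_sub: "X \<subseteq> {f. supp f \<subseteq> A} \<Longrightarrow> fspan X \<subseteq> {f. supp f \<subseteq> A}"
  using fvs.span_minimal[OF _ supp_sub_subspace] by blast

lemma GP_span_supp: "fspan (GP n r k) = {f. supp f \<subseteq> (\<Union>j\<in>{0..r}. Mon n j k)}"
  unfolding GP_def by (rule span_mn_char) (simp add: finite_Mon)


lemma supp_disj_zero: "supp f \<subseteq> A \<Longrightarrow> supp f \<subseteq> B \<Longrightarrow> A \<inter> B = {} \<Longrightarrow> f = 0"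
proof -
  assume "supp f \<subseteq> A" "supp f \<subseteq> B" "A \<inter> B = {}"
  then have "supp f = {}" by blast
  then show "f = 0" by (auto simp: supp_def fun_eq_iff)
qed

lemma GJ_supp: "GJ n r k \<subseteq> {f. supp f \<subseteq> {m \<in> World n. int (deg n m) \<ge> r + 1}}"
proof
  fix g assume "g \<in> GJ n r k"
  then obtain m where m: "m \<in> LM n r k" "g = kappa (mn m)" by (auto simp: GJ_def)
  obtain l :: nat where l: "l \<ge> 1" "m \<in> Mon n (r + int l - 1) (k + 1)" using LM_D[OF m(1)] by auto
  have "supp g \<subseteq> Mon n (r + int l - 1 + 1) (k + 1 - 1)"
    using kappa_supp[of "mn m" n "r + int l - 1" "k + 1"] l m by (simp add: supp_mn)
  also have "\<dots> \<subseteq> {m \<in> World n. int (deg n m) \<ge> r + 1}" using l(1) by (auto simp: Mon_alt)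
  finally show "g \<in> {f. supp f \<subseteq> {m \<in> World n. int (deg n m) \<ge> r + 1}}" by simp
qed

lemma GJ_KI: "GJ n r k \<subseteq> KI n"
proof
  fix g assume "g \<in> GJ n r k"
  then obtain m where m: "m \<in> LM n r k" "g = kappa (mn m)" by (auto simp: GJ_def)
  obtain l :: nat where l: "m \<in> Mon n (r + int l - 1) (k + 1)" using LM_D[OF m(1)] by auto
  then show "g \<in> KI n" using m kappa_mn_KI Mon_World by blast
qed

lemma dGJ_supp: "dext n ` GJ n r k \<subseteq> {f. supp f \<subseteq> {m \<in> World n. int (deg n m) \<ge> r}}"
proof
  fix g assume "g \<in> dext n ` GJ n r k"
  then obtain m where m: "m \<in> LM n r k" "g = dext n (kappa (mn m))" by (auto simp: GJ_def)
  obtain l :: nat where l: "l \<ge> 1" "m \<in> Mon n (r + int l - 1) (k + 1)" using LM_D[OF m(1)] by auto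
  have "supp (kappa (mn m)) \<subseteq> Mon n (r + int l - 1 + 1) (k + 1 - 1)"
    using kappa_supp[of "mn m" n "r + int l - 1" "k + 1"] l m by (simp add: supp_mn)
  then have "supp g \<subseteq> Mon n (r + int l - 1 + 1 - 1) (k + 1 - 1 + 1)"
    using dext_supp[OF kappa_Fin] m(2) by blast
  also have "\<dots> \<subseteq> {m \<in> World n. int (deg n m) \<ge> r}" using l(1) by (auto simp: Mon_alt)
  finally show "g \<in> {f. supp f \<subseteq> {m \<in> World n. int (deg n m) \<ge> r}}" by simp
qed

definition DZ :: "nat \<Rightarrow> form set" where "DZ n = {y. y \<in> Fin \<and> dext n y = 0}"

lemma DZ_subspace: "fvs.subspace (DZ n)"
  unfolding fvs.subspace_def DZ_def
  using Fin_subspace[unfolded fvs.subspace_def]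
  by (auto simp: dext_def lin_ext_add lin_ext_scale)

lemma dGJ_DZ: "dext n ` GJ n r k \<subseteq> DZ n"
proof
  fix g assume "g \<in> dext n ` GJ n r k"
  then obtain h where h: "h \<in> GJ n r k" "g = dext n h" by auto
  have "h \<in> KI n" using h GJ_KI by blast
  then have "dext n (dext n h) = 0" using dext_dext KI_props by blast
  then show "g \<in> DZ n" using h dext_Fin by (simp add: DZ_def)
qed

context
  fixes n :: nat and r k :: int
  assumes r1: "r \<ge> 1" and k0: "k \<ge> 0"
begin

definition "G0 = GP n (r - 1) k"
definition "GB = kappa ` mn ` Mon n (r - 1) (k + 1)"
definition "G1 = GJ n r k"
definition "G2 = dext n ` GJ n r (k - 1)"

lemma Sminus_eq: "Sminus n r k = fspan (G0 \<union> GB \<union> G1 \<union> G2)"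
proof -
  let ?T = "fspan (G0 \<union> GB \<union> G1 \<union> G2)"
  let ?U = "GP n (r - 1) k \<union> GJ n (r - 1) k \<union> dext n ` GJ n r (k - 1)
   \<union> kappa ` GP n (r - 1) (k + 1) \<union> kappa ` GJ n (r - 1) (k + 1) \<union> kappa ` dext n ` GJ n r k"
  have G1U: "g \<in> fspan ?U" if g: "g \<in> G1" for g
  proof -
    obtain m where m: "m \<in> LM n r k" "g = kappa (mn m)" using g by (auto simp: G1_def GJ_def)
    obtain l :: nat where l: "l \<ge> 1" "m \<in> Mon n (r + int l - 1) (k + 1)" using LM_D[OF m(1)] by auto
    have e: "kappa (dext n g) = fscale (of_int (r + int l - 1 + (k + 1))) g"
      using kappa_dext_gen[OF l(2)] m(2) by simp
    have c: "of_int (r + int l - 1 + (k + 1)) \<noteq> (0::real)" using r1 k0 l(1) by simp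
    have "dext n g \<in> dext n ` GJ n r k" using g by (simp add: G1_def)
    then have "kappa (dext n g) \<in> kappa ` dext n ` GJ n r k" by (rule imageI)
    then have "kappa (dext n g) \<in> ?U" by (rule UnI2)
    then have "kappa (dext n g) \<in> fspan ?U" by (rule fvs.span_base)
    then have "fscale (1 / of_int (r + int l - 1 + (k + 1))) (kappa (dext n g)) \<in> fspan ?U"
      by (rule fvs.span_scale)
    then show ?thesis using c by (simp add: e fvs.scale_scale)
  qed
  have A: "?U \<subseteq> ?T"
  proof -
    have a2: "GJ n (r - 1) k \<subseteq> ?T"
    proof
      fix g assume "g \<in> GJ n (r - 1) k"
      then obtain m where m: "m \<in> LM n (r - 1) k" "g = kappa (mn m)" by (auto simp: GJ_def)
      obtain l :: nat where l: "l \<ge> 1" "m \<in> Mon n (r - 1 + int l - 1) (k + 1)" "ldeg n m \<ge> l"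
        using LM_D[OF m(1)] by auto
      show "g \<in> ?T"
      proof (cases "l = 1")
        case True
        then have "m \<in> Mon n (r - 1) (k + 1)" using l by simp
        then have "g \<in> GB" using m by (auto simp: GB_def)
        then show ?thesis by (intro fvs.span_base) (rule UnI1, rule UnI1, rule UnI2)
      next
        case False
        then have "m \<in> Mon n (r + int (l - 1) - 1) (k + 1)" using l by (simp add: of_nat_diff)
        moreover have "l - 1 \<ge> 1" "ldeg n m \<ge> l - 1" using l False by auto
        ultimately have "m \<in> LM n r k" using LM_I by blast
        then have "g \<in> G1" using m by (auto simp: G1_def GJ_def)
        then show ?thesis by (intro fvs.span_base) blast
      qed
    qed
    have a4: "kappa ` GP n (r - 1) (k + 1) \<subseteq> ?T"
    proof
      fix g assume "g \<in> kappa ` GP n (r - 1) (k + 1)"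
      then obtain m j where m: "j \<in> {0..r - 1}" "m \<in> Mon n j (k + 1)" "g = kappa (mn m)"
        by (auto simp: GP_def)
      show "g \<in> ?T"
      proof (cases "j = r - 1")
        case True
        then have "g \<in> GB" using m by (auto simp: GB_def)
        then show ?thesis by (intro fvs.span_base) blast
      next
        case False
        have "supp g \<subseteq> Mon n (j + 1) (k + 1 - 1)"
          using kappa_supp[of "mn m" n j "k + 1"] m by (simp add: supp_mn)
        moreover have "j + 1 \<in> {0..r - 1}" using m(1) False by auto
        ultimately have "supp g \<subseteq> (\<Union>j\<in>{0..r - 1}. Mon n j k)" by auto
        then have "g \<in> fspan G0" unfolding G0_def GP_span_supp by simp
        then show ?thesis using fvs.span_mono[of G0 "G0 \<union> GB \<union> G1 \<union> G2"] by blast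
      qed
    qed
    have a5: "kappa ` GJ n (r - 1) (k + 1) \<subseteq> ?T"
    proof
      fix g assume "g \<in> kappa ` GJ n (r - 1) (k + 1)"
      then obtain m where m: "m \<in> LM n (r - 1) (k + 1)" "g = kappa (kappa (mn m))" by (auto simp: GJ_def)
      obtain l :: nat where "m \<in> Mon n (r - 1 + int l - 1) (k + 1 + 1)" using LM_D[OF m(1)] by auto
      then have "m \<in> World n" using Mon_World by blast
      then have "g = 0" using m KI_props(3)[OF kappa_mn_KI] by simp
      then show "g \<in> ?T" by (simp add: fvs.span_zero)
    qed
    have a6: "kappa ` dext n ` GJ n r k \<subseteq> ?T"
    proof
      fix g assume "g \<in> kappa ` dext n ` GJ n r k"
      then obtain m where m: "m \<in> LM n r k" "g = kappa (dext n (kappa (mn m)))" by (auto simp: GJ_def)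
      obtain l :: nat where l: "m \<in> Mon n (r + int l - 1) (k + 1)" using LM_D[OF m(1)] by auto
      have "kappa (mn m) \<in> G1" using m(1) by (auto simp: G1_def GJ_def)
      then have "kappa (mn m) \<in> ?T" by (intro fvs.span_base) blast
      then have "fscale (of_int (r + int l - 1 + (k + 1))) (kappa (mn m)) \<in> ?T" by (rule fvs.span_scale)
      then show "g \<in> ?T" using kappa_dext_gen[OF l] m(2) by simp
    qed
    have "G0 \<subseteq> ?T" "dext n ` GJ n r (k - 1) \<subseteq> ?T"
      using fvs.span_superset[of "G0 \<union> GB \<union> G1 \<union> G2"] by (auto simp: G2_def)
    then show ?thesis unfolding Un_subset_iff using a2 a4 a5 a6 by (simp add: G0_def)
  qed
  have B: "G0 \<union> GB \<union> G1 \<union> G2 \<subseteq> fspan ?U"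
  proof -
    have "G0 \<union> G2 \<subseteq> fspan ?U" using fvs.span_superset[of ?U] by (auto simp: G0_def G2_def)
    moreover have "GB \<subseteq> fspan ?U"
    proof
      fix g assume "g \<in> GB"
      then obtain m where m: "m \<in> Mon n (r - 1) (k + 1)" "g = kappa (mn m)" by (auto simp: GB_def)
      have "r - 1 \<in> {0..r - 1}" using r1 by simp
      then have "m \<in> (\<Union>j\<in>{0..r - 1}. Mon n j (k + 1))" using m(1) by blast
      then have "mn m \<in> GP n (r - 1) (k + 1)" unfolding GP_def by (rule imageI)
      then have "g \<in> kappa ` GP n (r - 1) (k + 1)" using m(2) by blast
      then have "g \<in> ?U" by (intro UnI1 UnI2)
      then show "g \<in> fspan ?U" by (rule fvs.span_base)
    qed
    moreover have "G1 \<subseteq> fspan ?U" using G1U by blast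
    ultimately show ?thesis by blast
  qed
  have "Sminus n r k = fspan ?U" by (rule Sminus_char)
  also have "\<dots> = ?T" unfolding fvs.span_eq using A B by blast
  finally show ?thesis .
qed


lemma dims: "fdim (Sminus n r k) = fdim (Pminus n r k) + fdim (J n r k) + fdim (J n r (k - 1))"
proof -
  let ?Low = "\<Union>j\<in>{0..r - 1}. Mon n j k"
  let ?Hi0 = "{m \<in> World n. int (deg n m) \<ge> r}"
  let ?Hi1 = "{m \<in> World n. int (deg n m) \<ge> r + 1}"
  have fin: "finite G0" "finite GB" "finite G1" "finite G2"
    by (auto simp: G0_def GB_def G1_def G2_def finite_GP finite_GJ finite_Mon)
  have S0: "fspan G0 \<subseteq> {f. supp f \<subseteq> ?Low}" unfolding G0_def GP_span_supp by simp
  have SB: "GB \<subseteq> {f. supp f \<subseteq> Mon n r k}"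
  proof
    fix g assume "g \<in> GB"
    then obtain m where m: "m \<in> Mon n (r - 1) (k + 1)" "g = kappa (mn m)" by (auto simp: GB_def)
    then show "g \<in> {f. supp f \<subseteq> Mon n r k}"
      using kappa_supp[of "mn m" n "r - 1" "k + 1"] by (simp add: supp_mn)
  qed
  have GBK: "GB \<subseteq> KI n" unfolding GB_def using kappa_mn_KI Mon_World by blast
  have d1: "?Low \<inter> ?Hi0 = {}" by (auto simp: Mon_alt)
  have d2: "Mon n r k \<inter> ?Hi1 = {}" by (auto simp: Mon_alt)
  have d3: "?Low \<inter> Mon n r k = {}" by (auto simp: Mon_alt)
  have MH: "Mon n r k \<subseteq> ?Hi0" by (auto simp: Mon_alt)
  have H10: "?Hi1 \<subseteq> ?Hi0" by auto
  have Hdeg: "?Hi0 \<subseteq> {m. deg n m \<ge> 1}" using r1 by auto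
  have Hdeg1: "?Hi1 \<subseteq> {m. deg n m \<ge> 1}" using r1 by auto
  have S1: "G1 \<subseteq> {f. supp f \<subseteq> ?Hi1}" unfolding G1_def by (rule GJ_supp)
  have S2: "G2 \<subseteq> {f. supp f \<subseteq> ?Hi0}" unfolding G2_def using dGJ_supp[of n r "k - 1"] by simp
  have eP: "fdim (Pminus n r k) = fdim G0 + fdim GB"
  proof -
    have "fspan G0 \<inter> fspan GB \<subseteq> {0}"
    proof
      fix f assume f: "f \<in> fspan G0 \<inter> fspan GB"
      then have "supp f \<subseteq> ?Low" using S0 by blast
      moreover have "supp f \<subseteq> Mon n r k" using f span_supp_sub[OF SB] by blast
      ultimately show "f \<in> {0}" using supp_disj_zero[OF _ _ d3] by blast
    qed
    then have "fdim (G0 \<union> GB) = fdim G0 + fdim GB" by (rule dim_union_direct[OF fin(1,2)])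
    moreover have "Pminus n r k = fspan (G0 \<union> GB)" using Pminus_char by (simp add: G0_def GB_def)
    ultimately show ?thesis by simp
  qed
  have e1: "fdim (GB \<union> G1) = fdim GB + fdim G1"
  proof -
    have "fspan GB \<inter> fspan G1 \<subseteq> {0}"
    proof
      fix f assume f: "f \<in> fspan GB \<inter> fspan G1"
      then have "supp f \<subseteq> Mon n r k" using span_supp_sub[OF SB] by blast
      moreover have "supp f \<subseteq> ?Hi1" using f span_supp_sub[OF S1] by blast
      ultimately show "f \<in> {0}" using supp_disj_zero[OF _ _ d2] by blast
    qed
    then show ?thesis by (rule dim_union_direct[OF fin(2,3)])
  qed
  have e2: "fdim ((GB \<union> G1) \<union> G2) = fdim (GB \<union> G1) + fdim G2"
  proof -
    have sub1: "GB \<union> G1 \<subseteq> KI n" using GBK GJ_KI by (auto simp: G1_def)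
    have sub2: "G2 \<subseteq> DZ n" unfolding G2_def by (rule dGJ_DZ)
    have sub3: "GB \<union> G1 \<subseteq> {f. supp f \<subseteq> ?Hi0}" using SB S1 MH H10 by blast
    have "fspan (GB \<union> G1) \<inter> fspan G2 \<subseteq> {0}"
    proof
      fix f assume f: "f \<in> fspan (GB \<union> G1) \<inter> fspan G2"
      have fK: "f \<in> KI n" using f fvs.span_minimal[OF sub1 KI_subspace] by blast
      have fD: "f \<in> DZ n" using f fvs.span_minimal[OF sub2 DZ_subspace] by blast
      have fS: "supp f \<subseteq> ?Hi0" using f span_supp_sub[OF sub3] by blast
      have "f = 0" using core[OF fK] fD fS Hdeg by (auto simp: DZ_def)
      then show "f \<in> {0}" by simp
    qed
    moreover have "finite (GB \<union> G1)" using fin by simp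
    ultimately show ?thesis using dim_union_direct[OF _ fin(4)] by blast
  qed
  have e3: "fdim (G0 \<union> ((GB \<union> G1) \<union> G2)) = fdim G0 + fdim ((GB \<union> G1) \<union> G2)"
  proof -
    have sub: "(GB \<union> G1) \<union> G2 \<subseteq> {f. supp f \<subseteq> ?Hi0}" using SB S1 S2 MH H10 by blast
    have "fspan G0 \<inter> fspan ((GB \<union> G1) \<union> G2) \<subseteq> {0}"
    proof
      fix f assume f: "f \<in> fspan G0 \<inter> fspan ((GB \<union> G1) \<union> G2)"
      have a: "supp f \<subseteq> ?Low" using f S0 by blast
      have b: "supp f \<subseteq> ?Hi0" using f span_supp_sub[OF sub] by blast
      show "f \<in> {0}" using supp_disj_zero[OF a b d1] by simp
    qed
    moreover have fu: "finite ((GB \<union> G1) \<union> G2)" using fin by simp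
    ultimately show ?thesis using dim_union_direct[OF fin(1) fu] by blast
  qed
  have eS: "fdim (Sminus n r k) = fdim G0 + fdim GB + fdim G1 + fdim G2"
  proof -
    have u: "G0 \<union> GB \<union> G1 \<union> G2 = G0 \<union> ((GB \<union> G1) \<union> G2)" by blast
    have "fdim (Sminus n r k) = fdim (G0 \<union> GB \<union> G1 \<union> G2)" unfolding Sminus_eq by (rule fvs.dim_span)
    then have "fdim (Sminus n r k) = fdim (G0 \<union> ((GB \<union> G1) \<union> G2))" by (simp only: u)
    then show ?thesis using e1 e2 e3 by linarith
  qed
  have eJ: "fdim (J n r k) = fdim G1" by (simp add: J_char G1_def)
  have eJ': "fdim (J n r (k - 1)) = fdim G2"
  proof -
    have "fdim (dext n ` GJ n r (k - 1)) = fdim (GJ n r (k - 1))"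
      unfolding dext_def
    proof (rule dim_image_inj[OF finite_GJ GJ_Fin])
      fix x assume x: "x \<in> fspan (GJ n r (k - 1))" "lin_ext (d_mono n) x = 0"
      have "x \<in> KI n" using x fvs.span_minimal[OF GJ_KI KI_subspace] by blast
      moreover have "supp x \<subseteq> ?Hi1" using x span_supp_sub[OF GJ_supp] by blast
      ultimately show "x = 0" using core[of x n] x(2) Hdeg1 by (auto simp: dext_def)
    qed
    then show ?thesis by (simp add: J_char G2_def)
  qed
  show ?thesis using eP eS eJ eJ' by simp
qed

end


lemma choose_fact_real: "real ((x + y) choose x) = fact (x + y) / (fact x * fact y)"
  by (simp add: binomial_fact)

lemma I1_core:
  fixes t j b :: nat
  shows "((t+j+b+2) choose (t+j+2)) * ((t+j+1) choose (j+1)) + ((t+j+b+3) choose (t+j+2)) * ((t+j+1) choose j)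
       = ((t+j+b+2) choose (t+1)) * ((j+b+2) choose (j+1))"
proof -
  define X :: real where "X = fact (t+j+b+2)"
  define Y :: real where "Y = fact (t+j+1)"
  define B :: real where "B = fact b"
  define Jf :: real where "Jf = fact j"
  define T :: real where "T = fact t"
  define W :: real where "W = fact (j+b+1)"
  have pos: "X > 0" "Y > 0" "B > 0" "Jf > 0" "T > 0" "W > 0" by (simp_all add: X_def Y_def B_def Jf_def T_def W_def)
  have fS: "\<And>m. (fact (Suc m) :: real) = real (Suc m) * fact m" by (rule fact_Suc)
  have c1: "real ((t+j+b+2) choose (t+j+2)) = X / ((t+j+2) * Y * B)"
  proof -
    have "(t+j+b+2) = (t+j+2) + (b)" by simp
    then have "real ((t+j+b+2) choose (t+j+2)) = real (((t+j+2) + (b)) choose (t+j+2))" by (simp only:)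
    also have "\<dots> = fact (t+j+2+b) / (fact (t+j+2) * fact b)" by (rule choose_fact_real)
    also have "(fact (t+j+2)::real) = (real (t+j+2)) * Y" unfolding Y_def using fS[of "t+j+1"] by simp
    finally show ?thesis by (simp add: X_def B_def ac_simps)
  qed
  have c2: "real ((t+j+1) choose (j+1)) = Y / ((j+1) * Jf * T)"
  proof -
    have "(t+j+1) = (j+1) + (t)" by simp
    then have "real ((t+j+1) choose (j+1)) = real (((j+1) + (t)) choose (j+1))" by (simp only:)
    also have "\<dots> = fact (j+1+t) / (fact (j+1) * fact t)" by (rule choose_fact_real)
    also have "(fact (j+1)::real) = (real (j+1)) * Jf" unfolding Jf_def using fS[of "j"] by simp
    finally show ?thesis by (simp add: Y_def T_def ac_simps)
  qed
  have c3: "real ((t+j+b+3) choose (t+j+2)) = (t+j+b+3) * X / ((t+j+2) * Y * ((b+1) * B))"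
  proof -
    have "(t+j+b+3) = (t+j+2) + ((b+1))" by simp
    then have "real ((t+j+b+3) choose (t+j+2)) = real (((t+j+2) + ((b+1))) choose (t+j+2))" by (simp only:)
    also have "\<dots> = fact (t+j+2+(b+1)) / (fact (t+j+2) * fact (b+1))" by (rule choose_fact_real)
    also have "(fact (t+j+2)::real) = (real (t+j+2)) * Y" unfolding Y_def using fS[of "t+j+1"] by simp
    also have "(fact (b+1)::real) = (real (b+1)) * B" unfolding B_def using fS[of "b"] by simp
    also have "(fact (t+j+2+(b+1))::real) = (real (t+j+b+3)) * X" unfolding X_def using fS[of "t+j+b+2"]
      by (simp add: ac_simps)
    finally show ?thesis by (simp add: ac_simps)
  qed
  have c4: "real ((t+j+1) choose j) = Y / (Jf * ((t+1) * T))"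
  proof -
    have "real ((t+j+1) choose j) = real ((j + (t+1)) choose j)" by (simp add: ac_simps)
    also have "\<dots> = fact (j+(t+1)) / (fact j * fact (t+1))" by (rule choose_fact_real)
    also have "(fact (t+1)::real) = (real (t+1)) * T" unfolding T_def using fS[of "t"] by simp
    finally show ?thesis by (simp add: Y_def Jf_def ac_simps)
  qed
  have c5: "real ((t+j+b+2) choose (t+1)) = X / ((t+1) * T * W)"
  proof -
    have "(t+j+b+2) = (t+1) + ((j+b+1))" by simp
    then have "real ((t+j+b+2) choose (t+1)) = real (((t+1) + ((j+b+1))) choose (t+1))" by (simp only:)
    also have "\<dots> = fact (t+1+(j+b+1)) / (fact (t+1) * fact (j+b+1))" by (rule choose_fact_real)
    also have "(fact (t+1)::real) = (real (t+1)) * T" unfolding T_def using fS[of "t"] by simp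
    finally show ?thesis by (simp add: X_def W_def ac_simps)
  qed
  have c6: "real ((j+b+2) choose (j+1)) = (j+b+2) * W / ((j+1) * Jf * ((b+1) * B))"
  proof -
    have "(j+b+2) = (j+1) + ((b+1))" by simp
    then have "real ((j+b+2) choose (j+1)) = real (((j+1) + ((b+1))) choose (j+1))" by (simp only:)
    also have "\<dots> = fact (j+1+(b+1)) / (fact (j+1) * fact (b+1))" by (rule choose_fact_real)
    also have "(fact (j+1)::real) = (real (j+1)) * Jf" unfolding Jf_def using fS[of "j"] by simp
    also have "(fact (b+1)::real) = (real (b+1)) * B" unfolding B_def using fS[of "b"] by simp
    also have "(fact (j+1+(b+1))::real) = (real (j+b+2)) * W" unfolding W_def using fS[of "j+b+1"]
      by (simp add: ac_simps)
    finally show ?thesis by (simp add: ac_simps)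
  qed
  define D where "D = X / (B * Jf * T)"
  define tt jj bb where "tt = real t" "jj = real j" "bb = real b"
  have nn: "tt \<ge> 0" "jj \<ge> 0" "bb \<ge> 0" by (simp_all add: tt_jj_bb_def)
  have r: "1 / ((tt+jj+2)*(jj+1)) + (tt+jj+bb+3) / ((tt+jj+2)*(bb+1)*(tt+1)) = (jj+bb+2) / ((tt+1)*(jj+1)*(bb+1))"
  proof -
    have d: "tt+jj+2 \<noteq> 0" "jj+1 \<noteq> 0" "bb+1 \<noteq> 0" "tt+1 \<noteq> 0" using nn by linarith+
    define P where "P = (tt+jj+2)*(jj+1)*(bb+1)*(tt+1)"
    have P0: "P \<noteq> 0" using d by (simp add: P_def)
    have e1: "1/((tt+jj+2)*(jj+1)) = ((bb+1)*(tt+1)) / P"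
      using d unfolding P_def by (simp add: divide_simps)
    have e2: "(tt+jj+bb+3)/((tt+jj+2)*(bb+1)*(tt+1)) = ((tt+jj+bb+3)*(jj+1)) / P"
      using d unfolding P_def by (simp add: divide_simps)
    have e3: "(jj+bb+2)/((tt+1)*(jj+1)*(bb+1)) = ((jj+bb+2)*(tt+jj+2)) / P"
      using d unfolding P_def by (simp add: divide_simps)
    have "(bb+1)*(tt+1) + (tt+jj+bb+3)*(jj+1) = (jj+bb+2)*(tt+jj+2)" by (simp add: algebra_simps)
    then show ?thesis unfolding e1 e2 e3 by (simp add: add_divide_distrib[symmetric])
  qed
  have dd: "real t + real j + 2 \<noteq> 0" "real j + 1 \<noteq> 0" "real b + 1 \<noteq> 0" "real t + 1 \<noteq> 0"
     "real t + real j + real b + 3 \<noteq> 0" "real j + real b + 2 \<noteq> 0" by linarith+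
  have p1: "real ((t+j+b+2) choose (t+j+2)) * real ((t+j+1) choose (j+1)) = D * (1 / ((tt+jj+2)*(jj+1)))"
    unfolding c1 c2 D_def tt_jj_bb_def using pos dd by (simp add: divide_simps) (simp add: algebra_simps)
  have p2: "real ((t+j+b+3) choose (t+j+2)) * real ((t+j+1) choose j) = D * ((tt+jj+bb+3) / ((tt+jj+2)*(bb+1)*(tt+1)))"
    unfolding c3 c4 D_def tt_jj_bb_def using pos dd by (simp add: divide_simps) (simp add: algebra_simps)
  have p3: "real ((t+j+b+2) choose (t+1)) * real ((j+b+2) choose (j+1)) = D * ((jj+bb+2) / ((tt+1)*(jj+1)*(bb+1)))"
    unfolding c5 c6 D_def tt_jj_bb_def using pos dd by (simp add: divide_simps) (simp add: algebra_simps)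
  have "real (((t+j+b+2) choose (t+j+2)) * ((t+j+1) choose (j+1)) + ((t+j+b+3) choose (t+j+2)) * ((t+j+1) choose j))
       = real (((t+j+b+2) choose (t+1)) * ((j+b+2) choose (j+1)))"
    unfolding of_nat_add of_nat_mult p1 p2 p3 distrib_left[symmetric] r ..
  then show ?thesis by (simp only: of_nat_eq_iff)
qed


lemma choose_swap: "((a + b) choose a) = ((a + b) choose (b::nat))"
  using binomial_symmetric[of a "a + b"] by simp

lemma I1:
  fixes s n j :: nat
  assumes "s \<ge> 1"
  shows "((s+n-1) choose (s+j+1)) * ((s+j) choose (j+1)) + ((s+n) choose (s+1+j)) * ((s+j) choose j)
       = ((n+s-1) choose s) * (n choose (j+1))"
proof -
  obtain t where t: "s = t + 1" using assms by (metis add.commute le_Suc_ex)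
  consider (a) "j + 1 > n" | (b) "j + 1 = n" | (c) "j + 2 \<le> n" by linarith
  then show ?thesis
  proof cases
    case a
    then show ?thesis using assms by (simp add: binomial_eq_0)
  next
    case b
    then have "((s+n-1) choose (s+j+1)) = 0" using assms by (simp add: binomial_eq_0)
    moreover have "s+1+j = s+n" using b by simp
    then have "(s+n) choose (s+1+j) = 1" by (simp only: binomial_n_n)
    moreover have "(s+j) choose j = (n+s-1) choose s"
    proof -
      have "n+s-1 = s+j" using b by simp
      then show ?thesis using choose_swap[of s j] by simp
    qed
    ultimately show ?thesis using b by simp
  next
    case c
    then obtain b where nb: "n = j + b + 2" by (metis add.commute add.left_commute le_Suc_ex)
    have e: "s+n-1 = t+j+b+2" "s+j+1 = t+j+2" "s+j = t+j+1" "s+n = t+j+b+3" "s+1+j = t+j+2" "n+s-1 = t+j+b+2"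
      using nb t by simp_all
    have e2: "s = t + 1" "n = j + b + 2" using nb t by simp_all
    have f1: "(s+n-1) choose (s+j+1) = (t+j+b+2) choose (t+j+2)" by (subst e(1), subst e(2), rule refl)
    have f2: "(s+j) choose (j+1) = (t+j+1) choose (j+1)" by (subst e(3), rule refl)
    have f3: "(s+n) choose (s+1+j) = (t+j+b+3) choose (t+j+2)" by (subst e(4), subst e(5), rule refl)
    have f4: "(s+j) choose j = (t+j+1) choose j" by (subst e(3), rule refl)
    have f5: "(n+s-1) choose s = (t+j+b+2) choose (t+1)" by (subst e(6), subst e2(1), rule refl)
    have f6: "n choose (j+1) = (j+b+2) choose (j+1)" by (subst e2(2), rule refl)
    show ?thesis unfolding f1 f2 f3 f4 f5 f6 by (rule I1_core)
  qed
qed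

lemma I2:
  fixes r n k :: nat
  assumes "r \<ge> 1" "k \<le> n"
  shows "((n+r-1) choose (r-1)) * (n choose k) + ((r+n-1) choose (r+k)) * ((r+k-1) choose k)
       = ((r+n) choose (r+k)) * ((r+k-1) choose k)"
proof -
  obtain q where q: "r = q + 1" using assms by (metis add.commute le_Suc_ex)
  obtain a where a: "n = k + a" using assms le_Suc_ex by blast
  have pas: "(r+n) choose (r+k) = ((q+n) choose (q+k)) + ((q+n) choose (q+k+1))"
    using q by simp
  have m1: "((q+a+k) choose (q+k)) * ((q+k) choose k) = ((q+a+k) choose k) * ((q+a) choose q)"
    by (rule choose_mult_lemma)
  have m2: "((a+q+k) choose (a+k)) * ((a+k) choose k) = ((a+q+k) choose k) * ((a+q) choose a)"
    by (rule choose_mult_lemma)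
  have s1: "(a+q+k) choose (a+k) = (a+q+k) choose q" using choose_swap[of "a+k" q] by (simp add: ac_simps)
  have s2: "(a+q) choose a = (q+a) choose q" using choose_swap[of a q] by (simp add: ac_simps)
  have key: "((n+q) choose q) * (n choose k) = ((q+n) choose (q+k)) * ((q+k) choose k)"
    using m1 m2 s1 s2 a by (simp add: ac_simps)
  show ?thesis using key pas q by (simp add: algebra_simps)
qed

lemma Ssum:
  fixes n r :: nat
  assumes "n \<ge> 1" "r \<ge> 1"
  shows "(\<Sum>j<r. (n+j-1) choose j) = (n+r-1) choose (r-1)"
proof -
  obtain p where p: "n = p + 1" using assms by (metis add.commute le_Suc_ex)
  have "{..<r} = {..r-1}" using assms by auto
  then have "(\<Sum>j<r. (n+j-1) choose j) = (\<Sum>j\<le>r-1. (p+j) choose j)" using p by simp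
  also have "\<dots> = Suc (p + (r-1)) choose (r-1)" by (rule sum_choose_lower)
  also have "\<dots> = (n+r-1) choose (r-1)" using p assms by simp
  finally show ?thesis .
qed


definition AS :: "nat \<Rightarrow> nat \<Rightarrow> (nat \<Rightarrow> nat) set" where
  "AS n s = {a. (\<forall>i. a i \<noteq> 0 \<longrightarrow> i \<in> {1..n}) \<and> sum a {1..n} = s}"

lemma Mon_prod: "Mon n (int s) (int j) = AS n s \<times> {t. t \<subseteq> {1..n} \<and> card t = j}"
  by (auto simp: Mon_def AS_def simp flip: of_nat_sum)

lemma count_in_AS:
  assumes "M \<in> multisets_of_size {1..n} s"
  shows "count M \<in> AS n s"
proof -
  have sM: "set_mset M \<subseteq> {1..n}" "size M = s" using assms by (auto simp: multisets_of_size_def)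
  have "\<forall>i. count M i \<noteq> 0 \<longrightarrow> i \<in> {1..n}" using sM(1) by (auto simp: count_eq_zero_iff)
  moreover have "sum (count M) {1..n} = s"
  proof -
    have "sum (count M) {1..n} = sum (count M) (set_mset M)"
      by (rule sum.mono_neutral_right) (use sM(1) in \<open>auto simp: count_eq_zero_iff\<close>)
    also have "\<dots> = size M" by (simp add: size_multiset_overloaded_eq)
    finally show ?thesis using sM(2) by simp
  qed
  ultimately show ?thesis by (simp add: AS_def)
qed

lemma card_AS: "card (AS n s) = (n + s - 1) choose s"
proof -
  have bij: "bij_betw count (multisets_of_size {1..n} s) (AS n s)"
    unfolding bij_betw_def
  proof
    show "inj_on count (multisets_of_size {1..n} s)"
    proof (rule inj_onI)
      fix M N :: "nat multiset" assume "count M = count N"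
      then show "M = N" by (simp add: multiset_eq_iff)
    qed
    show "count ` multisets_of_size {1..n} s = AS n s"
    proof
      show "count ` multisets_of_size {1..n} s \<subseteq> AS n s" using count_in_AS by blast
      show "AS n s \<subseteq> count ` multisets_of_size {1..n} s"
      proof
        fix a assume a: "a \<in> AS n s"
        have aI: "\<And>i. a i \<noteq> 0 \<Longrightarrow> i \<in> {1..n}" using a by (simp add: AS_def)
        have fin: "finite {x. a x > 0}"
          by (rule finite_subset[of _ "{1..n}"]) (use aI in auto)
        define M where "M = Abs_multiset a"
        have c: "count M = a" unfolding M_def using fin by (rule count_Abs_multiset)
        have sub: "set_mset M \<subseteq> {1..n}"
        proof
          fix x assume "x \<in># M"
          then have "count M x \<noteq> 0" by (simp add: count_eq_zero_iff)
          then show "x \<in> {1..n}" using aI c by simp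
        qed
        have "size M = s"
        proof -
          have "size M = sum (count M) (set_mset M)" by (simp add: size_multiset_overloaded_eq)
          also have "\<dots> = sum a {1..n}" unfolding c
          proof (rule sum.mono_neutral_left)
            show "finite {1..n}" by simp
            show "set_mset M \<subseteq> {1..n}" by (rule sub)
            show "\<forall>i\<in>{1..n} - set_mset M. a i = 0"
              using c by (auto simp: count_eq_zero_iff[symmetric])
          qed
          finally show ?thesis using a by (simp add: AS_def)
        qed
        then have "M \<in> multisets_of_size {1..n} s" using sub by (simp add: multisets_of_size_def)
        then show "a \<in> count ` multisets_of_size {1..n} s" using c by (metis image_eqI)
      qed
    qed
  qed
  have "card (AS n s) = card (multisets_of_size {1..n} s)" using bij_betw_same_card[OF bij] by simp
  also have "\<dots> = (card {1..n} + s - 1) choose s" by (rule card_multisets_of_size) simp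
  finally show ?thesis by simp
qed

lemma card_Mon: "card (Mon n (int s) (int j)) = ((n + s - 1) choose s) * (n choose j)"
proof -
  have "card {t. t \<subseteq> {1..n} \<and> card t = j} = n choose j"
    using n_subsets[of "{1..n}" j] by simp
  then show ?thesis unfolding Mon_prod by (simp add: card_cartesian_product card_AS)
qed


definition Kd :: "nat \<Rightarrow> int \<Rightarrow> int \<Rightarrow> nat" where
  "Kd n s j = fdim (kappa ` mn ` Mon n (s - 1) (j + 1))"

lemma core0:
  assumes "y \<in> Fin" "supp y \<subseteq> World n" "kappa y = 0" "dext n y = 0" "\<And>m. m \<in> supp y \<Longrightarrow> Nw n m \<noteq> 0"
  shows "y = 0"
proof -
  have h: "dext n (kappa y) + kappa (dext n y) = (\<lambda>m. Nw n m * y m)"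
    using homotopy assms(1,2) by blast
  have "dext n (kappa y) + kappa (dext n y) = 0"
    using assms(3,4) by (simp add: dext_def kappa_def)
  then have z: "\<And>m. Nw n m * y m = 0" using h by (metis zero_fun_apply)
  have "supp y = {}"
  proof (rule ccontr)
    assume "supp y \<noteq> {}"
    then obtain m where m: "m \<in> supp y" by blast
    then have "y m \<noteq> 0" by (simp add: supp_def)
    then show False using z[of m] assms(5)[OF m] by simp
  qed
  then show ?thesis by (auto simp: supp_def fun_eq_iff)
qed

lemma Nw_Mon: "m \<in> Mon n s j \<Longrightarrow> Nw n m = of_int (s + j)"
  by (auto simp: Nw_def Mon_alt)

lemma dim_zero_set: "X \<subseteq> {0} \<Longrightarrow> fdim X = 0"
proof -
  assume X: "X \<subseteq> {0}"
  have "fspan {} = fspan X"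
    unfolding fvs.span_eq using X fvs.span_zero by auto
  from fvs.dim_eq_card[OF this fvs.independent_empty] show ?thesis by simp
qed

lemma kappa_mn_supp: "m \<in> Mon n s j \<Longrightarrow> supp (kappa (mn m)) \<subseteq> Mon n (s + 1) (j - 1)"
  using kappa_supp[of "mn m" n s j] by (simp add: supp_mn)

lemma dext_mn_supp: "m \<in> Mon n s j \<Longrightarrow> supp (dext n (mn m)) \<subseteq> Mon n (s - 1) (j + 1)"
  using dext_supp[of "mn m" n s j] by (simp add: supp_mn)

lemma span_Mon: "fspan (mn ` Mon n s j) = {f. supp f \<subseteq> Mon n s j}"
  by (rule span_mn_char[OF finite_Mon])

lemma rec:
  assumes "s + j > 0"
  shows "card (Mon n s j) = Kd n s j + Kd n (s + 1) (j - 1)"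
proof -
  let ?M = "Mon n s j"
  let ?KG = "kappa ` mn ` Mon n (s - 1) (j + 1)"
  let ?DG = "dext n ` mn ` Mon n (s + 1) (j - 1)"
  let ?KG' = "kappa ` mn ` ?M"
  have fKG: "finite ?KG" and fDG: "finite ?DG" by (simp_all add: finite_Mon)
  have NwM: "\<And>m. m \<in> ?M \<Longrightarrow> Nw n m \<noteq> 0" using assms Nw_Mon by force
  have suppKG: "?KG \<subseteq> {f. supp f \<subseteq> ?M}"
    using kappa_mn_supp[of _ n "s - 1" "j + 1"] by auto
  have suppDG: "?DG \<subseteq> {f. supp f \<subseteq> ?M}"
    using dext_mn_supp[of _ n "s + 1" "j - 1"] by auto
  have R1: "fspan (?KG \<union> ?DG) = fspan (mn ` ?M)"
    unfolding fvs.span_eq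
  proof
    show "?KG \<union> ?DG \<subseteq> fspan (mn ` ?M)" unfolding span_Mon using suppKG suppDG by blast
    show "mn ` ?M \<subseteq> fspan (?KG \<union> ?DG)"
    proof
      fix x assume "x \<in> mn ` ?M"
      then obtain m where m: "m \<in> ?M" "x = mn m" by auto
      have hm: "dext n (kappa (mn m)) + kappa (dext n (mn m)) = fscale (of_int (s + j)) (mn m)"
      proof -
        have "dext n (kappa (mn m)) + kappa (dext n (mn m)) = (\<lambda>m'. Nw n m' * mn m m')"
          using homotopy[of "mn m" n] m Mon_World by (auto simp: supp_mn)
        also have "\<dots> = fscale (of_int (s + j)) (mn m)" using homog[of "mn m" n s j] m by (simp add: supp_mn)
        finally show ?thesis .
      qed
      have "kappa (mn m) \<in> fspan (mn ` Mon n (s + 1) (j - 1))"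
        unfolding span_Mon using kappa_mn_supp[OF m(1)] by simp
      then have "dext n (kappa (mn m)) \<in> dext n ` fspan (mn ` Mon n (s + 1) (j - 1))" by blast
      also have "\<dots> = fspan ?DG" unfolding dext_def by (rule img_span) simp
      also have "\<dots> \<subseteq> fspan (?KG \<union> ?DG)" by (rule fvs.span_mono) blast
      finally have a: "dext n (kappa (mn m)) \<in> fspan (?KG \<union> ?DG)" .
      have "dext n (mn m) \<in> fspan (mn ` Mon n (s - 1) (j + 1))"
        unfolding span_Mon using dext_mn_supp[OF m(1)] by simp
      then have "kappa (dext n (mn m)) \<in> kappa ` fspan (mn ` Mon n (s - 1) (j + 1))" by blast
      also have "\<dots> = fspan ?KG" unfolding kappa_def by (rule img_span) simp
      also have "\<dots> \<subseteq> fspan (?KG \<union> ?DG)" by (rule fvs.span_mono) blast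
      finally have b: "kappa (dext n (mn m)) \<in> fspan (?KG \<union> ?DG)" .
      have "fscale (of_int (s + j)) (mn m) \<in> fspan (?KG \<union> ?DG)"
        using fvs.span_add[OF a b] hm by simp
      then have "fscale (1 / of_int (s + j)) (fscale (of_int (s + j)) (mn m)) \<in> fspan (?KG \<union> ?DG)"
        by (rule fvs.span_scale)
      then show "x \<in> fspan (?KG \<union> ?DG)" using assms m(2) by (simp add: fvs.scale_scale)
    qed
  qed
  have R2: "fspan ?KG \<inter> fspan ?DG \<subseteq> {0}"
  proof
    fix y assume y: "y \<in> fspan ?KG \<inter> fspan ?DG"
    have "?KG \<subseteq> KI n" using kappa_mn_KI Mon_World by blast
    then have yK: "y \<in> KI n" using y fvs.span_minimal[OF _ KI_subspace] by blast
    have "?DG \<subseteq> DZ n"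
    proof
      fix g assume "g \<in> ?DG"
      then obtain m where m: "m \<in> Mon n (s + 1) (j - 1)" "g = dext n (mn m)" by auto
      have "dext n g = 0" using dext_dext[of "mn m" n] m Mon_World by (auto simp: supp_mn)
      then show "g \<in> DZ n" using m dext_Fin by (simp add: DZ_def)
    qed
    then have yD: "y \<in> DZ n" using y fvs.span_minimal[OF _ DZ_subspace] by blast
    have yS: "supp y \<subseteq> ?M" using y span_supp_sub[OF suppKG] by blast
    have "y = 0"
      using core0[OF KI_props(1,2,3)[OF yK]] yD yS NwM by (auto simp: DZ_def)
    then show "y \<in> {0}" by simp
  qed
  have c1: "card ?M = fdim ?KG + fdim ?DG"
  proof -
    have "card ?M = fdim (mn ` ?M)" by (simp add: dim_mn finite_Mon)
    also have "\<dots> = fdim (?KG \<union> ?DG)" using R1 by (metis fvs.dim_span)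
    also have "\<dots> = fdim ?KG + fdim ?DG" by (rule dim_union_direct[OF fKG fDG R2])
    finally show ?thesis .
  qed
  have R3: "fdim (kappa ` ?DG) = fdim ?DG"
    unfolding kappa_def
  proof (rule dim_image_inj[OF fDG])
    show "?DG \<subseteq> Fin" by simp
    fix x assume x: "x \<in> fspan ?DG" "lin_ext kappa_mono x = 0"
    have "?DG \<subseteq> DZ n"
    proof
      fix g assume "g \<in> ?DG"
      then obtain m where m: "m \<in> Mon n (s + 1) (j - 1)" "g = dext n (mn m)" by auto
      have "dext n g = 0" using dext_dext[of "mn m" n] m Mon_World by (auto simp: supp_mn)
      then show "g \<in> DZ n" using m dext_Fin by (simp add: DZ_def)
    qed
    then have xD: "x \<in> DZ n" using x fvs.span_minimal[OF _ DZ_subspace] by blast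
    have xS: "supp x \<subseteq> ?M" using x span_supp_sub[OF suppDG] by blast
    have xW: "supp x \<subseteq> World n" using xS Mon_World by blast
    have xF: "x \<in> Fin" "dext n x = 0" using xD by (auto simp: DZ_def)
    have xk: "kappa x = 0" using x(2) by (simp add: kappa_def)
    show "x = 0" by (rule core0[OF xF(1) xW xk xF(2)]) (use xS NwM in blast)
  qed
  have R4: "fspan (kappa ` ?DG) = fspan ?KG'"
    unfolding fvs.span_eq
  proof
    show "kappa ` ?DG \<subseteq> fspan ?KG'"
    proof
      fix y assume "y \<in> kappa ` ?DG"
      then obtain m where m: "m \<in> Mon n (s + 1) (j - 1)" "y = kappa (dext n (mn m))" by auto
      have "dext n (mn m) \<in> fspan (mn ` ?M)"
        unfolding span_Mon using dext_mn_supp[OF m(1)] by simp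
      then have "y \<in> kappa ` fspan (mn ` ?M)" using m(2) by blast
      also have "\<dots> = fspan ?KG'" unfolding kappa_def by (rule img_span) simp
      finally show "y \<in> fspan ?KG'" .
    qed
    show "?KG' \<subseteq> fspan (kappa ` ?DG)"
    proof
      fix y assume "y \<in> ?KG'"
      then obtain m where m: "m \<in> ?M" "y = kappa (mn m)" by auto
      have "kappa (mn m) \<in> fspan (mn ` Mon n (s + 1) (j - 1))"
        unfolding span_Mon using kappa_mn_supp[OF m(1)] by simp
      then have "dext n (kappa (mn m)) \<in> dext n ` fspan (mn ` Mon n (s + 1) (j - 1))" by blast
      also have "\<dots> = fspan ?DG" unfolding dext_def by (rule img_span) simp
      finally have "kappa (dext n (kappa (mn m))) \<in> kappa ` fspan ?DG" by blast
      also have "\<dots> = fspan (kappa ` ?DG)" unfolding kappa_def by (rule img_span) simp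
      finally have z: "kappa (dext n (kappa (mn m))) \<in> fspan (kappa ` ?DG)" .
      have "fscale (of_int (s + j)) (kappa (mn m)) \<in> fspan (kappa ` ?DG)"
        using z unfolding kappa_dext_gen[OF m(1)] .
      then have "fscale (1 / of_int (s + j)) (fscale (of_int (s + j)) (kappa (mn m))) \<in> fspan (kappa ` ?DG)"
        by (rule fvs.span_scale)
      then show "y \<in> fspan (kappa ` ?DG)" using assms m(2) by (simp add: fvs.scale_scale)
    qed
  qed
  have "fdim ?DG = fdim ?KG'" using R3 R4 by (metis fvs.dim_span)
  moreover have "Kd n (s + 1) (j - 1) = fdim ?KG'" by (simp add: Kd_def)
  moreover have "Kd n s j = fdim ?KG" by (simp add: Kd_def)
  ultimately show ?thesis using c1 by simp
qed


lemma Kd_neg: "Kd n s (-1) = 0"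
proof -
  have "kappa ` mn ` Mon n (s - 1) 0 \<subseteq> {0}"
  proof
    fix y assume "y \<in> kappa ` mn ` Mon n (s - 1) 0"
    then obtain a t where m: "(a, t) \<in> Mon n (s - 1) 0" "y = kappa (mn (a, t))" by auto
    have "finite t" using m(1) finite_subset[of t "{1..n}"] by (auto simp: Mon_def)
    then have "t = {}" using m(1) by (auto simp: Mon_def)
    then show "y \<in> {0}" using m(2) by (simp add: kappa_def mn_def kappa_mono_def fun_eq_iff)
  qed
  then show ?thesis unfolding Kd_def by (simp add: dim_zero_set)
qed

lemma Kd_closed:
  assumes "s \<ge> 1"
  shows "Kd n (int s) (int j) = ((s+n-1) choose (s+j)) * ((s+j-1) choose j)"
  using assms
proof (induction j arbitrary: s)
  case 0
  have "card (Mon n (int s) 0) = Kd n (int s) 0 + Kd n (int s + 1) (0 - 1)"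
    by (rule rec) (use 0 in simp)
  then have "Kd n (int s) 0 = card (Mon n (int s) (int 0))" using Kd_neg by simp
  also have "\<dots> = (n + s - 1) choose s" using card_Mon[of n s 0] by simp
  finally show ?case by (simp add: ac_simps)
next
  case (Suc j)
  have "card (Mon n (int s) (int (Suc j))) = Kd n (int s) (int (Suc j)) + Kd n (int s + 1) (int (Suc j) - 1)"
    by (rule rec) (use Suc in simp)
  moreover have "Kd n (int s + 1) (int (Suc j) - 1) = Kd n (int (s + 1)) (int j)" by (simp add: add.commute)
  moreover have "Kd n (int (s + 1)) (int j) = ((s+1+n-1) choose (s+1+j)) * ((s+1+j-1) choose j)"
    by (rule Suc.IH) simp
  moreover have "card (Mon n (int s) (int (Suc j))) = ((n + s - 1) choose s) * (n choose (j + 1))"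
    using card_Mon[of n s "Suc j"] by simp
  moreover have "((s+n-1) choose (s+j+1)) * ((s+j) choose (j+1)) + ((s+n) choose (s+1+j)) * ((s+j) choose j)
       = ((n+s-1) choose s) * (n choose (j+1))" by (rule I1) (use Suc in simp)
  ultimately have "Kd n (int s) (int (Suc j)) = ((s+n-1) choose (s+j+1)) * ((s+j) choose (j+1))"
    by simp
  then show ?case by simp
qed

lemma card_Low:
  assumes "r \<ge> 1"
  shows "card (\<Union>j\<in>{0..int r - 1}. Mon n j (int k)) = (\<Sum>j<r. card (Mon n (int j) (int k)))"
proof -
  have "card (\<Union>j\<in>{0..int r - 1}. Mon n j (int k)) = (\<Sum>j\<in>{0..int r - 1}. card (Mon n j (int k)))"
  proof (rule card_UN_disjoint)
    show "finite {0..int r - 1}" by simp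
    show "\<forall>i\<in>{0..int r - 1}. finite (Mon n i (int k))" by (simp add: finite_Mon)
    show "\<forall>i\<in>{0..int r - 1}. \<forall>j\<in>{0..int r - 1}. i \<noteq> j \<longrightarrow> Mon n i (int k) \<inter> Mon n j (int k) = {}"
      by (auto simp: Mon_alt)
  qed
  moreover have e: "{0..int r - 1} = int ` {..<r}"
  proof
    show "{0..int r - 1} \<subseteq> int ` {..<r}"
    proof
      fix x assume x: "x \<in> {0..int r - 1}"
      then have "x = int (nat x)" "nat x < r" by auto
      then show "x \<in> int ` {..<r}" by blast
    qed
    show "int ` {..<r} \<subseteq> {0..int r - 1}" by auto
  qed
  moreover have "(\<Sum>j\<in>int ` {..<r}. card (Mon n j (int k))) = (\<Sum>j<r. card (Mon n (int j) (int k)))"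
    using sum.reindex[of int "{..<r}" "\<lambda>j. card (Mon n j (int k))"] by (simp add: o_def)
  ultimately show ?thesis by simp
qed

lemma Pminus_dim:
  assumes "r \<ge> 1"
  shows "fdim (Pminus n (int r) (int k)) = card (\<Union>j\<in>{0..int r - 1}. Mon n j (int k)) + Kd n (int r) (int k)"
proof -
  let ?Low = "\<Union>j\<in>{0..int r - 1}. Mon n j (int k)"
  let ?KG = "kappa ` mn ` Mon n (int r - 1) (int k + 1)"
  have fL: "finite ?Low" by (simp add: finite_Mon)
  have SG: "fspan (GP n (int r - 1) (int k)) = {f. supp f \<subseteq> ?Low}" by (rule GP_span_supp)
  have SK: "?KG \<subseteq> {f. supp f \<subseteq> Mon n (int r) (int k)}"
    using kappa_mn_supp[of _ n "int r - 1" "int k + 1"] by auto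
  have d: "?Low \<inter> Mon n (int r) (int k) = {}" by (auto simp: Mon_alt)
  have I: "fspan (GP n (int r - 1) (int k)) \<inter> fspan ?KG \<subseteq> {0}"
  proof
    fix f assume f: "f \<in> fspan (GP n (int r - 1) (int k)) \<inter> fspan ?KG"
    have a: "supp f \<subseteq> ?Low" using f SG by blast
    have b: "supp f \<subseteq> Mon n (int r) (int k)" using f span_supp_sub[OF SK] by blast
    show "f \<in> {0}" using supp_disj_zero[OF a b d] by simp
  qed
  have "fdim (Pminus n (int r) (int k)) = fdim (GP n (int r - 1) (int k) \<union> ?KG)"
    unfolding Pminus_char by (rule fvs.dim_span)
  also have "\<dots> = fdim (GP n (int r - 1) (int k)) + fdim ?KG"
    by (rule dim_union_direct[OF finite_GP _ I]) (simp add: finite_Mon)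
  also have "fdim (GP n (int r - 1) (int k)) = card ?Low"
    unfolding GP_def by (rule dim_mn[OF fL])
  also have "fdim ?KG = Kd n (int r) (int k)" by (simp add: Kd_def)
  finally show ?thesis .
qed

lemma Pminus_formula:
  fixes n r k :: nat
  assumes "n \<ge> 1" "r \<ge> 1" "k \<le> n"
  shows "fdim (Pminus n (int r) (int k)) = ((r + n) choose (r + k)) * ((r + k - 1) choose k)"
proof -
  have "fdim (Pminus n (int r) (int k)) = (\<Sum>j<r. card (Mon n (int j) (int k))) + Kd n (int r) (int k)"
    using Pminus_dim[OF assms(2)] card_Low[OF assms(2)] by simp
  also have "(\<Sum>j<r. card (Mon n (int j) (int k))) = (\<Sum>j<r. (n + j - 1) choose j) * (n choose k)"
    by (simp add: card_Mon sum_distrib_right)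
  also have "(\<Sum>j<r. (n + j - 1) choose j) = (n + r - 1) choose (r - 1)" by (rule Ssum[OF assms(1,2)])
  also have "Kd n (int r) (int k) = ((r+n-1) choose (r+k)) * ((r+k-1) choose k)"
    by (rule Kd_closed[OF assms(2)])
  also have "((n+r-1) choose (r-1)) * (n choose k) + ((r+n-1) choose (r+k)) * ((r+k-1) choose k)
       = ((r+n) choose (r+k)) * ((r+k-1) choose k)" by (rule I2[OF assms(2,3)])
  finally show ?thesis .
qed

theorem mainTheorem7:
  fixes n r k :: nat
  assumes "n \<ge> 1" and "r \<ge> 1" and "k \<le> n"
  shows "fdim (Sminus n (int r) (int k)) =
           fdim (Pminus n (int r) (int k)) + fdim (J n (int r) (int k)) + fdim (J n (int r) (int k - 1))
         \<and> fdim (Pminus n (int r) (int k)) = ((r + n) choose (r + k)) * ((r + k - 1) choose k)"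
proof
  show "fdim (Sminus n (int r) (int k)) =
           fdim (Pminus n (int r) (int k)) + fdim (J n (int r) (int k)) + fdim (J n (int r) (int k - 1))"
    by (rule dims) (use assms in simp_all)
  show "fdim (Pminus n (int r) (int k)) = ((r + n) choose (r + k)) * ((r + k - 1) choose k)"
    by (rule Pminus_formula[OF assms])
qed


end
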